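(* Consider the setting described in the context and suppose Assumptions (A1) and (A2) hold. Fix a policy $\pi$ and estimated nuisance functions $\hat\mu_0,\hat\mu_1,\hat e_1,\hat s$. Then $\hat R_{\mathrm{SE}}(\pi)$ is an unbiased estimator of $R(\pi)$ if at least one of the following holds: (i) $\hat\mu_a(x)=\mu_a(x)$ for $a=0,1$; (ii) $\hat e_1(x)=e_1(x)$ and $\hat s(x)=s(x)$.
   Context: Setting: $A\in\{0,1\}$ is a binary treatment, $X\in\mathcal{X}\subset\mathbb{R}^p$ covariates, $Y\in\mathbb{R}$ outcome, $Y(a)$ potential outcomes with $Y=AY(1)+(1-A)Y(0)$. $G\in\{0,1\}$ indicates the source ($G=1$) or target ($G=0$) domain. Data: $n_1$ source units with observed $(X_i,A_i,Y_i,G_i=1)$ and $n_0$ target units with observed $(X_i,G_i=0)$ only; $n=n_0+n_1$ and $q=n_1/n$ (the probability of a unit belonging to the source population). Nuisance functions: $e_1(x)=\mathbb{P}(A=1\mid X=x,G=1)$, $s(x)=\mathbb{P}(G=1\mid X=x)$, $\mu_a(x)=\mathbb{E}[Y\mid X=x,A=a,G=1]$. For a policy $\pi:\mathcal{X}\to\{0,1\}$, $R(\pi)=\mathbb{E}[\pi(X)Y(1)+(1-\pi(X))Y(0)\mid G=0]$. Assumption (A1): $(Y(1),Y(0))\perp\!\!\!\perp A\mid X,G=1$ and $0<e_1(X)<1$. Assumption (A2): $(Y(0),Y(1))\perp\!\!\!\perp G\mid X$ and $0<s(X)<1$ for all $X$ in the source domain. The SE estimator is $$\hat R_{\mathrm{SE}}(\pi)=\frac1n\sum_{i=1}^n\Big[\frac{G_i}{1-q}\frac{\pi(X_i)A_i\{Y_i-\hat\mu_1(X_i)\}}{\hat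 e_1(X_i)}\frac{1-\hat s(X_i)}{\hat s(X_i)}+\frac{G_i}{1-q}\frac{(1-\pi(X_i))(1-A_i)\{Y_i-\hat\mu_0(X_i)\}}{1-\hat e_1(X_i)}\frac{1-\hat s(X_i)}{\hat s(X_i)}+\frac{1-G_i}{1-q}\{\pi(X_i)\hat\mu_1(X_i)+(1-\pi(X_i))\hat\mu_0(X_i)\}\Big].$$ *)

theory Defs
  imports "HOL-Probability.Probability"
begin

definition sigma_of :: "'w measure \<Rightarrow> 'b measure \<Rightarrow> ('w \<Rightarrow> 'b) \<Rightarrow> 'w measure" where
  "sigma_of N MV V = vimage_algebra (space N) V MV"

definition cond_on :: "'w measure \<Rightarrow> ('w \<Rightarrow> bool) \<Rightarrow> 'w measure" where
  "cond_on N P = uniform_measure N {w \<in> space N. P w}"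

text \<open>f is a version of the regression function x \<mapsto> E_N[Z | V = x], i.e.
  f is measurable and f(V) = E_N[Z | sigma(V)] almost surely.\<close>
definition is_cond_exp_fn :: "'w measure \<Rightarrow> ('w \<Rightarrow> 'x::topological_space) \<Rightarrow> ('w \<Rightarrow> real) \<Rightarrow> ('x \<Rightarrow> real) \<Rightarrow> bool" where
  "is_cond_exp_fn N V Z f \<longleftrightarrow> f \<in> borel_measurable borel \<and>
     (AE w in N. f (V w) = real_cond_exp N (sigma_of N borel V) Z w)"

definition cond_indep :: "'w measure \<Rightarrow> 'a measure \<Rightarrow> ('w \<Rightarrow> 'a) \<Rightarrow> 'b measure \<Rightarrow> ('w \<Rightarrow> 'b)
    \<Rightarrow> 'c measure \<Rightarrow> ('w \<Rightarrow> 'c) \<Rightarrow> bool" where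
  "cond_indep N MZ Z MW W MV V \<longleftrightarrow>
     (\<forall>S \<in> sets MZ. \<forall>T \<in> sets MW. AE w in N.
        real_cond_exp N (sigma_of N MV V) (\<lambda>u. indicator S (Z u) * indicator T (W u)) w
        = real_cond_exp N (sigma_of N MV V) (\<lambda>u. indicator S (Z u)) w
          * real_cond_exp N (sigma_of N MV V) (\<lambda>u. indicator T (W u)) w)"

definition policy_value :: "'w measure \<Rightarrow> ('w \<Rightarrow> 'x) \<Rightarrow> ('w \<Rightarrow> real) \<Rightarrow> ('w \<Rightarrow> real) \<Rightarrow> ('w \<Rightarrow> real)
    \<Rightarrow> ('x \<Rightarrow> real) \<Rightarrow> real" where
  "policy_value N X G Y0 Y1 pol =
     (\<integral> w. pol (X w) * Y1 w + (1 - pol (X w)) * Y0 w \<partial>(cond_on N (\<lambda>w. G w = 0)))"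

definition se_term :: "real \<Rightarrow> ('x \<Rightarrow> real) \<Rightarrow> ('x \<Rightarrow> real) \<Rightarrow> ('x \<Rightarrow> real) \<Rightarrow> ('x \<Rightarrow> real)
    \<Rightarrow> ('x \<Rightarrow> real) \<Rightarrow> 'x \<times> real \<times> real \<times> real \<Rightarrow> real" where
  "se_term q pol mu0h mu1h eh sh u = (case u of (x, g, a, y) \<Rightarrow>
       g / (1 - q) * (pol x * a * (y - mu1h x) / eh x) * ((1 - sh x) / sh x)
     + g / (1 - q) * ((1 - pol x) * (1 - a) * (y - mu0h x) / (1 - eh x)) * ((1 - sh x) / sh x)
     + (1 - g) / (1 - q) * (pol x * mu1h x + (1 - pol x) * mu0h x))"

definition R_SE :: "nat \<Rightarrow> real \<Rightarrow> ('x \<Rightarrow> real) \<Rightarrow> ('x \<Rightarrow> real) \<Rightarrow> ('x \<Rightarrow> real) \<Rightarrow> ('x \<Rightarrow> real)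
    \<Rightarrow> ('x \<Rightarrow> real) \<Rightarrow> (nat \<Rightarrow> 'x \<times> real \<times> real \<times> real) \<Rightarrow> real" where
  "R_SE n q pol mu0h mu1h eh sh z = (1 / real n) * (\<Sum>i<n. se_term q pol mu0h mu1h eh sh (z i))"

end

theory Submission
  imports Defs
begin


lemma sfs_sigma_of:
  fixes X :: "'w \<Rightarrow> 'x::topological_space"
  assumes "prob_space N" "X \<in> borel_measurable N"
  shows "sigma_finite_subalgebra N (sigma_of N borel X)"
proof -
  interpret prob_space N by fact
  have "subalgebra N (sigma_of N borel X)"
    unfolding subalgebra_def sigma_of_def
    using sets_image_in_sets[of N "space N" X borel] assms(2) by auto
  then have "finite_measure_subalgebra N (sigma_of N borel X)"
    by (simp add: finite_measure_axioms finite_measure_subalgebra_axioms.intro finite_measure_subalgebra_def)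
  then show ?thesis by (rule finite_measure_subalgebra_is_sigma_finite)
qed

lemma Fmeas_comp:
  fixes X :: "'w \<Rightarrow> 'x::topological_space"
  assumes "h \<in> borel_measurable borel"
  shows "(\<lambda>w. h (X w)) \<in> borel_measurable (sigma_of N borel X)"
proof -
  have "X \<in> measurable (sigma_of N borel X) borel"
    unfolding sigma_of_def by (rule measurable_vimage_algebra1) auto
  then show ?thesis using assms by (rule measurable_compose)
qed

lemma sigma_of_unif: "sigma_of (uniform_measure M E) MV V = sigma_of M MV V"
  by (simp add: sigma_of_def)

lemma unif_density:
  assumes "prob_space M" "E \<in> sets M" "measure M E > 0"
  shows "uniform_measure M E = density M (\<lambda>x. ennreal (indicator E x / measure M E))"
proof -
  interpret prob_space M by fact
  show ?thesis unfolding uniform_measure_def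
    apply (rule density_cong)
    using assms(2) apply measurable
    using assms(2) apply measurable
    using assms(3) by (auto simp: emeasure_eq_measure divide_ennreal indicator_def ennreal_1[symmetric] simp del: ennreal_1)
qed

lemma unif_integral:
  fixes f :: "'a \<Rightarrow> real"
  assumes "prob_space M" "E \<in> sets M" "measure M E > 0" "f \<in> borel_measurable M"
  shows "integral\<^sup>L (uniform_measure M E) f = integral\<^sup>L M (\<lambda>x. indicator E x * f x) / measure M E"
    and "integrable (uniform_measure M E) f \<longleftrightarrow> integrable M (\<lambda>x. indicator E x * f x)"
proof -
  have d: "(\<lambda>x. indicator E x / measure M E) \<in> borel_measurable M" using assms(2) by simp
  have "integral\<^sup>L (uniform_measure M E) f = integral\<^sup>L M (\<lambda>x. (indicator E x / measure M E) *\<^sub>R f x)"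
    unfolding unif_density[OF assms(1-3)]
    by (rule integral_density[OF assms(4) d]) (use assms(3) in auto)
  also have "\<dots> = integral\<^sup>L M (\<lambda>x. indicator E x * f x) / measure M E"
    by simp
  finally show "integral\<^sup>L (uniform_measure M E) f = integral\<^sup>L M (\<lambda>x. indicator E x * f x) / measure M E" .
  have "integrable (uniform_measure M E) f \<longleftrightarrow> integrable M (\<lambda>x. (indicator E x / measure M E) *\<^sub>R f x)"
    unfolding unif_density[OF assms(1-3)]
    by (rule integrable_density[OF assms(4) d]) (use assms(3) in auto)
  also have "\<dots> \<longleftrightarrow> integrable M (\<lambda>x. (1 / measure M E) * (indicator E x * f x))"
    by (simp add: mult.commute)
  also have "\<dots> \<longleftrightarrow> integrable M (\<lambda>x. indicator E x * f x)"
    using assms(3) integrable_mult_left_iff[of M "1 / measure M E" "\<lambda>x. indicator E x * f x"] by simp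
  finally show "integrable (uniform_measure M E) f \<longleftrightarrow> integrable M (\<lambda>x. indicator E x * f x)" .
qed

lemma dens_distr_emeasure:
  fixes B :: "'w \<Rightarrow> real" and V :: "'w \<Rightarrow> 'v"
  assumes fm: "finite_measure N" and V: "V \<in> measurable N MV"
    and B: "B \<in> borel_measurable N" and Bb: "\<And>w. w \<in> space N \<Longrightarrow> 0 \<le> B w \<and> B w \<le> 1"
    and S: "S \<in> sets MV"
  shows "emeasure (distr (density N B) MV V) S = ennreal (\<integral>w. B w * indicator S (V w) \<partial>N)"
proof -
  interpret finite_measure N by fact
  have V': "V \<in> measurable (density N B) MV" using V by simp
  have pre: "V -` S \<inter> space N \<in> sets N" using V S by (rule measurable_sets)
  have "emeasure (distr (density N B) MV V) S = emeasure (density N B) (V -` S \<inter> space N)"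
    using emeasure_distr[OF V' S] by simp
  also have "\<dots> = (\<integral>\<^sup>+ w. ennreal (B w) * indicator (V -` S \<inter> space N) w \<partial>N)"
    using B pre by (simp add: emeasure_density)
  also have "\<dots> = (\<integral>\<^sup>+ w. ennreal (B w * indicator S (V w)) \<partial>N)"
    by (rule nn_integral_cong) (auto simp: indicator_def)
  also have "\<dots> = ennreal (\<integral>w. B w * indicator S (V w) \<partial>N)"
  proof (rule nn_integral_eq_integral)
    have m: "(\<lambda>w. B w * indicator S (V w)) \<in> borel_measurable N"
      using B V S by measurable
    show "integrable N (\<lambda>w. B w * indicator S (V w))"
      by (rule integrable_const_bound[where B=1]) (use Bb m in \<open>auto simp: indicator_def\<close>)
    show "AE w in N. 0 \<le> B w * indicator S (V w)"
      using Bb by auto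
  qed
  finally show ?thesis .
qed

lemma dens_distr_integral:
  fixes B :: "'w \<Rightarrow> real" and V :: "'w \<Rightarrow> 'v" and \<phi> :: "'v \<Rightarrow> real"
  assumes V: "V \<in> measurable N MV" and \<phi>: "\<phi> \<in> borel_measurable MV"
    and B: "B \<in> borel_measurable N" and Bb: "\<And>w. w \<in> space N \<Longrightarrow> 0 \<le> B w"
  shows "integral\<^sup>L (distr (density N B) MV V) \<phi> = (\<integral>w. B w * \<phi> (V w) \<partial>N)"
proof -
  have V': "V \<in> measurable (density N B) MV" using V by simp
  have "integral\<^sup>L (distr (density N B) MV V) \<phi> = integral\<^sup>L (density N B) (\<lambda>w. \<phi> (V w))"
    by (rule integral_distr[OF V' \<phi>])
  also have "\<dots> = (\<integral>w. B w *\<^sub>R \<phi> (V w) \<partial>N)"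
    by (rule integral_density) (use V \<phi> B Bb in auto)
  finally show ?thesis by simp
qed

lemma ext_meas:
  fixes Pa Pb :: "'w \<Rightarrow> real" and V :: "'w \<Rightarrow> 'v" and \<phi> :: "'v \<Rightarrow> real"
  assumes fm: "finite_measure N" and V: "V \<in> measurable N MV" and \<phi>: "\<phi> \<in> borel_measurable MV"
    and B: "Pa \<in> borel_measurable N" "Pb \<in> borel_measurable N"
    and Bb: "\<And>w. w \<in> space N \<Longrightarrow> 0 \<le> Pa w \<and> Pa w \<le> 1" "\<And>w. w \<in> space N \<Longrightarrow> 0 \<le> Pb w \<and> Pb w \<le> 1"
    and eq: "\<And>S. S \<in> sets MV \<Longrightarrow> (\<integral>w. Pa w * indicator S (V w) \<partial>N) = (\<integral>w. Pb w * indicator S (V w) \<partial>N)"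
  shows "(\<integral>w. Pa w * \<phi> (V w) \<partial>N) = (\<integral>w. Pb w * \<phi> (V w) \<partial>N)"
proof -
  have D: "distr (density N Pa) MV V = distr (density N Pb) MV V"
  proof (rule measure_eqI)
    show "sets (distr (density N Pa) MV V) = sets (distr (density N Pb) MV V)" by simp
    fix S assume "S \<in> sets (distr (density N Pa) MV V)"
    then have S: "S \<in> sets MV" by simp
    show "emeasure (distr (density N Pa) MV V) S = emeasure (distr (density N Pb) MV V) S"
      using dens_distr_emeasure[OF fm V B(1) Bb(1) S] dens_distr_emeasure[OF fm V B(2) Bb(2) S] eq[OF S]
      by simp
  qed
  show ?thesis
    using dens_distr_integral[OF V \<phi> B(1)] dens_distr_integral[OF V \<phi> B(2)] Bb D by auto
qed

lemma ind_ext: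
  fixes X :: "'w \<Rightarrow> 'x::topological_space" and Z :: "'w \<Rightarrow> 'z" and W ew :: "'w \<Rightarrow> real"
    and \<phi> :: "'z \<Rightarrow> real"
  assumes N: "prob_space N" and X: "X \<in> borel_measurable N" and Z: "Z \<in> measurable N MZ"
    and W: "W \<in> borel_measurable N" and Wb: "\<forall>w\<in>space N. W w \<in> {0,1}"
    and ci: "cond_indep N MZ Z borel W borel X"
    and ewm: "ew \<in> borel_measurable (sigma_of N borel X)" and ewb: "\<And>w. 0 \<le> ew w \<and> ew w \<le> 1"
    and ce: "AE w in N. real_cond_exp N (sigma_of N borel X) W w = ew w"
    and \<phi>: "\<phi> \<in> borel_measurable MZ" and Bset: "B \<in> sets (sigma_of N borel X)"
  shows "(\<integral>w. indicator B w * W w * \<phi> (Z w) \<partial>N) = (\<integral>w. indicator B w * ew w * \<phi> (Z w) \<partial>N)"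
proof -
  interpret prob_space N by fact
  let ?F = "sigma_of N borel X"
  interpret sigma_finite_subalgebra N ?F using sfs_sigma_of[OF N X] .
  have ewN[measurable]: "ew \<in> borel_measurable N" by (rule measurable_from_subalg[OF subalg ewm])
  have BN[measurable]: "B \<in> sets N" using Bset subalg by (meson subalgebra_def subsetD)
  have BF[measurable]: "(\<lambda>w. indicator B w :: real) \<in> borel_measurable ?F" using Bset by simp
  have BewF[measurable]: "(\<lambda>w. indicator B w * ew w :: real) \<in> borel_measurable ?F" using Bset ewm by simp
  have [measurable]: "W \<in> borel_measurable N" by fact
  have key: "(\<integral>w. indicator B w * W w * indicator S (Z w) \<partial>N) = (\<integral>w. indicator B w * ew w * indicator S (Z w) \<partial>N)"
    if S: "S \<in> sets MZ" for S
  proof -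
    have ZS[measurable]: "(\<lambda>u. indicator S (Z u) :: real) \<in> borel_measurable N" using Z S by measurable
    have "AE w in N. real_cond_exp N ?F (\<lambda>u. indicator S (Z u) * indicator {1} (W u)) w
        = real_cond_exp N ?F (\<lambda>u. indicator S (Z u)) w * real_cond_exp N ?F (\<lambda>u. indicator {1} (W u)) w"
      using ci S unfolding cond_indep_def by auto
    moreover have "AE w in N. real_cond_exp N ?F (\<lambda>u. indicator {1} (W u)) w = real_cond_exp N ?F W w"
      by (rule real_cond_exp_cong) (use Wb in \<open>auto simp: indicator_def\<close>)
    moreover have "AE w in N. real_cond_exp N ?F (\<lambda>u. indicator S (Z u) * indicator {1} (W u)) w
        = real_cond_exp N ?F (\<lambda>u. W u * indicator S (Z u)) w"
      apply (rule real_cond_exp_cong)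
      using Wb apply (auto simp: indicator_def)[1]
      using ZS apply measurable
      using ZS apply measurable
      done
    ultimately have ae: "AE w in N. real_cond_exp N ?F (\<lambda>u. W u * indicator S (Z u)) w
        = ew w * real_cond_exp N ?F (\<lambda>u. indicator S (Z u)) w"
      using ce by eventually_elim simp
    have m1: "(\<lambda>w. indicator B w * (W w * indicator S (Z w))) \<in> borel_measurable N"
      by measurable
    have a1: "AE w in N. norm (indicator B w * (W w * indicator S (Z w))) \<le> (1::real)"
      by (rule AE_I2) (use Wb in \<open>auto simp: indicator_def\<close>)
    have int1: "integrable N (\<lambda>w. indicator B w * (W w * indicator S (Z w)))"
      by (rule integrable_const_bound[OF a1 m1])
    have m2: "(\<lambda>w. (indicator B w * ew w) * indicator S (Z w)) \<in> borel_measurable N"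
      by measurable
    have a2: "AE w in N. norm ((indicator B w * ew w) * indicator S (Z w)) \<le> (1::real)"
      by (rule AE_I2) (use ewb in \<open>auto simp: indicator_def abs_le_iff\<close>)
    have int2: "integrable N (\<lambda>w. (indicator B w * ew w) * indicator S (Z w))"
      by (rule integrable_const_bound[OF a2 m2])
    have "(\<integral>w. indicator B w * W w * indicator S (Z w) \<partial>N) = (\<integral>w. indicator B w * (W w * indicator S (Z w)) \<partial>N)"
      by (simp add: mult.assoc)
    also have "\<dots> = (\<integral>w. indicator B w * real_cond_exp N ?F (\<lambda>u. W u * indicator S (Z u)) w \<partial>N)"
      by (rule real_cond_exp_intg(2)[symmetric]) (use int1 in auto)
    also have "\<dots> = (\<integral>w. (indicator B w * ew w) * real_cond_exp N ?F (\<lambda>u. indicator S (Z u)) w \<partial>N)"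
      by (rule integral_cong_AE) (use ae in auto)
    also have "\<dots> = (\<integral>w. indicator B w * ew w * indicator S (Z w) \<partial>N)"
      by (rule real_cond_exp_intg(2)) (use int2 in auto)
    finally show ?thesis .
  qed
  show ?thesis
    apply (rule ext_meas[where Pa="\<lambda>w. indicator B w * W w" and Pb="\<lambda>w. indicator B w * ew w", OF _ Z \<phi>])
    using key Wb ewb by (auto simp: indicator_def finite_measure_axioms)
qed

context sigma_finite_subalgebra
begin

lemma rce_local:
  assumes [measurable]: "g \<in> borel_measurable M" and B: "B \<in> sets F"
  shows "AE x in M. real_cond_exp M F (\<lambda>x. indicator B x * g x) x = indicator B x * real_cond_exp M F g x"
proof -
  have BF[measurable]: "(\<lambda>x. indicator B x :: ennreal) \<in> borel_measurable F" using B by simp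
  have e1: "(\<lambda>x. ennreal (indicator B x * g x)) = (\<lambda>x. indicator B x * ennreal (g x))"
    by (auto simp: indicator_def fun_eq_iff)
  have e2: "(\<lambda>x. ennreal (- (indicator B x * g x))) = (\<lambda>x. indicator B x * ennreal (- g x))"
    by (auto simp: indicator_def fun_eq_iff)
  have a1: "AE x in M. indicator B x * nn_cond_exp M F (\<lambda>x. ennreal (g x)) x = nn_cond_exp M F (\<lambda>x. indicator B x * ennreal (g x)) x"
    by (rule nn_cond_exp_prod) auto
  have a2: "AE x in M. indicator B x * nn_cond_exp M F (\<lambda>x. ennreal (- g x)) x = nn_cond_exp M F (\<lambda>x. indicator B x * ennreal (- g x)) x"
    by (rule nn_cond_exp_prod) auto
  show ?thesis
    using a1 a2 unfolding real_cond_exp_def e1 e2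
    by eventually_elim (auto simp: indicator_def)
qed

lemma rce_combo:
  assumes g[measurable]: "g \<in> borel_measurable M" and phi: "\<phi> \<in> borel_measurable F"
    and i1: "integrable M g1" and i2: "integrable M g2"
    and eq: "\<And>x. x \<in> space M \<Longrightarrow> g x = \<phi> x * g2 x + g1 x"
  shows "AE x in M. real_cond_exp M F g x = \<phi> x * real_cond_exp M F g2 x + real_cond_exp M F g1 x"
proof -
  have phiM[measurable]: "\<phi> \<in> borel_measurable M" by (rule measurable_from_subalg[OF subalg phi])
  have g2m[measurable]: "g2 \<in> borel_measurable M" "g1 \<in> borel_measurable M" using i1 i2 by auto
  define Bk where "Bk = (\<lambda>k::nat. {x \<in> space M. \<bar>\<phi> x\<bar> \<le> real k})"
  have spF: "space F = space M" using subalg by (simp add: subalgebra_def)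
  have BkF: "Bk k \<in> sets F" for k
  proof -
    note phi[measurable]
    have "{x \<in> space F. \<bar>\<phi> x\<bar> \<le> real k} \<in> sets F" by measurable
    then show ?thesis unfolding Bk_def spF .
  qed
  have BkM: "Bk k \<in> sets M" for k using BkF[of k] subalg by (meson subalgebra_def subsetD)
  have K: "AE x in M. indicator (Bk k) x * real_cond_exp M F g x
      = indicator (Bk k) x * (\<phi> x * real_cond_exp M F g2 x + real_cond_exp M F g1 x)" for k
  proof -
    have kM[measurable]: "Bk k \<in> sets M" by (rule BkM)
    have kF: "(\<lambda>x. indicator (Bk k) x * \<phi> x) \<in> borel_measurable F" 
      using BkF[of k] phi by (intro borel_measurable_times borel_measurable_indicator) 
    have kF2: "(\<lambda>x. indicator (Bk k) x :: real) \<in> borel_measurable F" 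
      using BkF[of k] by (intro borel_measurable_indicator) 
    have ip: "integrable M (\<lambda>x. (indicator (Bk k) x * \<phi> x) * g2 x)"
    proof (rule Bochner_Integration.integrable_bound[where f="\<lambda>x. real k * g2 x"])
      show "integrable M (\<lambda>x. real k * g2 x)" using i2 by simp
      show "(\<lambda>x. (indicator (Bk k) x * \<phi> x) * g2 x) \<in> borel_measurable M" by measurable
      show "AE x in M. norm (indicator (Bk k) x * \<phi> x * g2 x) \<le> norm (real k * g2 x)"
        by (rule AE_I2) (auto simp: Bk_def indicator_def abs_mult intro: mult_right_mono)
    qed
    have ib: "integrable M (\<lambda>x. indicator (Bk k) x * g1 x)"
      using integrable_mult_indicator[OF kM i1] by simp
    have "AE x in M. real_cond_exp M F (\<lambda>x. indicator (Bk k) x * g x) x = indicator (Bk k) x * real_cond_exp M F g x"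
      by (rule rce_local[OF g BkF])
    moreover have "AE x in M. real_cond_exp M F (\<lambda>x. indicator (Bk k) x * g x) x
        = real_cond_exp M F (\<lambda>x. (indicator (Bk k) x * \<phi> x) * g2 x + indicator (Bk k) x * g1 x) x"
      apply (rule real_cond_exp_cong)
      apply (rule AE_I2) apply (simp add: eq algebra_simps)
      apply measurable done
    moreover have "AE x in M. real_cond_exp M F (\<lambda>x. (indicator (Bk k) x * \<phi> x) * g2 x + indicator (Bk k) x * g1 x) x
        = real_cond_exp M F (\<lambda>x. (indicator (Bk k) x * \<phi> x) * g2 x) x + real_cond_exp M F (\<lambda>x. indicator (Bk k) x * g1 x) x"
      by (rule real_cond_exp_add[OF ip ib])
    moreover have "AE x in M. real_cond_exp M F (\<lambda>x. (indicator (Bk k) x * \<phi> x) * g2 x) x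
        = (indicator (Bk k) x * \<phi> x) * real_cond_exp M F g2 x"
      by (rule real_cond_exp_mult[OF kF g2m(1) ip])
    moreover have "AE x in M. real_cond_exp M F (\<lambda>x. indicator (Bk k) x * g1 x) x
        = indicator (Bk k) x * real_cond_exp M F g1 x"
      by (rule real_cond_exp_mult[OF kF2 g2m(2) ib])
    ultimately show ?thesis by eventually_elim (simp add: algebra_simps)
  qed
  then have "AE x in M. \<forall>k. indicator (Bk k) x * real_cond_exp M F g x
      = indicator (Bk k) x * (\<phi> x * real_cond_exp M F g2 x + real_cond_exp M F g1 x)"
    by (simp only: AE_all_countable) (use K in blast)
  then show ?thesis
  proof (rule AE_mp[OF _ AE_I2], intro impI)
    fix x assume x: "x \<in> space M" and H: "\<forall>k. indicator (Bk k) x * real_cond_exp M F g x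
      = indicator (Bk k) x * (\<phi> x * real_cond_exp M F g2 x + real_cond_exp M F g1 x)"
    obtain k :: nat where "\<bar>\<phi> x\<bar> \<le> real k" using real_arch_simple by blast
    then have "x \<in> Bk k" using x by (simp add: Bk_def)
    with H[rule_format, of k] show "real_cond_exp M F g x = \<phi> x * real_cond_exp M F g2 x + real_cond_exp M F g1 x"
      by simp
  qed
qed

lemma rce_nonneg_integrable:
  assumes g[measurable]: "integrable M g" and gnn: "\<And>x. x \<in> space M \<Longrightarrow> 0 \<le> g x"
    and b[measurable]: "b \<in> borel_measurable F"
    and ib: "integrable M (\<lambda>x. b x * real_cond_exp M F g x)"
  shows "integrable M (\<lambda>x. b x * g x)"
proof -
  have bM[measurable]: "b \<in> borel_measurable M" by (rule measurable_from_subalg[OF subalg b])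
  have gm[measurable]: "g \<in> borel_measurable M" using g by auto
  have fin: "(\<integral>\<^sup>+ x. nn_cond_exp M F (\<lambda>x. ennreal (g x)) x \<partial>M) = (\<integral>\<^sup>+ x. ennreal (g x) \<partial>M)"
    using nn_cond_exp_intg[of "\<lambda>x. 1" "\<lambda>x. ennreal (g x)"] by simp
  have "(\<integral>\<^sup>+ x. ennreal (g x) \<partial>M) < \<infinity>"
    using g gnn by (metis (no_types, lifting) AE_I2 infinity_ennreal_def integrableD(2) less_top nn_integral_cong real_norm_def abs_of_nonneg ennreal_neq_top)
  then have aefin: "AE x in M. nn_cond_exp M F (\<lambda>x. ennreal (g x)) x \<noteq> \<infinity>"
    using fin by (intro nn_integral_PInf_AE) auto
  have z1: "AE x in M. nn_cond_exp M F (\<lambda>x. ennreal (- g x)) x = nn_cond_exp M F (\<lambda>x. 0) x"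
    by (rule nn_cond_exp_cong) (use gnn in \<open>auto simp: ennreal_neg\<close>)
  have z2: "AE x in M. 0 = nn_cond_exp M F (\<lambda>x. 0) x"
    by (rule nn_cond_exp_F_meas) auto
  have ae: "AE x in M. nn_cond_exp M F (\<lambda>x. ennreal (g x)) x = ennreal (real_cond_exp M F g x)"
    using aefin z1 z2 unfolding real_cond_exp_def by eventually_elim (auto simp: ennreal_enn2real_if)
  have pos: "AE x in M. 0 \<le> real_cond_exp M F g x"
    by (rule real_cond_exp_pos) (use gnn in auto)
  have "(\<integral>\<^sup>+ x. ennreal (norm (b x * g x)) \<partial>M) = (\<integral>\<^sup>+ x. ennreal \<bar>b x\<bar> * ennreal (g x) \<partial>M)"
    by (rule nn_integral_cong) (use gnn in \<open>auto simp: abs_mult ennreal_mult\<close>)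
  also have "\<dots> = (\<integral>\<^sup>+ x. ennreal \<bar>b x\<bar> * nn_cond_exp M F (\<lambda>x. ennreal (g x)) x \<partial>M)"
    by (rule nn_cond_exp_intg[symmetric]) auto
  also have "\<dots> = (\<integral>\<^sup>+ x. ennreal (norm (b x * real_cond_exp M F g x)) \<partial>M)"
    apply (rule nn_integral_cong_AE)
    using ae pos by eventually_elim (auto simp: abs_mult ennreal_mult ennreal_neg)
  also have "\<dots> < \<infinity>" using ib by (simp add: integrable_iff_bounded)
  finally show ?thesis by (intro integrableI_bounded) auto
qed

lemma charact2:
  assumes "\<And>B. B \<in> sets F \<Longrightarrow> (\<integral>x. indicator B x * f x \<partial>M) = (\<integral>x. indicator B x * g x \<partial>M)"
      and "integrable M f" "integrable M g" "g \<in> borel_measurable F"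
  shows "AE x in M. real_cond_exp M F f x = g x"
  by (rule real_cond_exp_charact) (use assms in \<open>auto simp: set_lebesgue_integral_def\<close>)

end




locale setting =
  fixes M :: "'w measure" and X :: "'w \<Rightarrow> real ^ 'p" and G A Y0 Y1 Y :: "'w \<Rightarrow> real"
    and mu0 mu1 e1 s :: "real ^ 'p \<Rightarrow> real" and q :: real
  assumes M: "prob_space M"
    and measX: "X \<in> borel_measurable M" and measG: "G \<in> borel_measurable M"
    and measA: "A \<in> borel_measurable M"
    and measY0: "Y0 \<in> borel_measurable M" and measY1: "Y1 \<in> borel_measurable M"
    and binary: "\<forall>w\<in>space M. G w \<in> {0, 1} \<and> A w \<in> {0, 1}"
    and consistency: "\<forall>w\<in>space M. Y w = A w * Y1 w + (1 - A w) * Y0 w"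
    and int_Y0: "integrable M Y0" and int_Y1: "integrable M Y1"
    and q_def: "q = measure M {w \<in> space M. G w = 1}"
    and q_pos: "0 < q" and q_lt1: "q < 1"
    and e1_def: "is_cond_exp_fn (cond_on M (\<lambda>w. G w = 1)) X A e1"
    and s_def: "is_cond_exp_fn M X G s"
    and mu1_def: "is_cond_exp_fn (cond_on M (\<lambda>w. A w = 1 \<and> G w = 1)) X Y mu1"
    and mu0_def: "is_cond_exp_fn (cond_on M (\<lambda>w. A w = 0 \<and> G w = 1)) X Y mu0"
    and A1_indep: "cond_indep (cond_on M (\<lambda>w. G w = 1)) borel (\<lambda>w. (Y1 w, Y0 w)) borel A borel X"
    and A1_pos: "AE w in M. G w = 1 \<longrightarrow> 0 < e1 (X w) \<and> e1 (X w) < 1"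
    and A2_indep: "cond_indep M borel (\<lambda>w. (Y0 w, Y1 w)) borel G borel X"
    and A2_pos: "AE w in M. 0 < s (X w) \<and> s (X w) < 1"

sublocale setting \<subseteq> prob_space M by (rule M)
sublocale setting \<subseteq> Fs: sigma_finite_subalgebra M "sigma_of M borel X"
  by (rule sfs_sigma_of[OF M measX])

context setting
begin

abbreviation "FX \<equiv> sigma_of M borel X"
abbreviation "c1 \<equiv> real_cond_exp M FX Y1"
abbreviation "c0 \<equiv> real_cond_exp M FX Y0"
definition "sc = (\<lambda>w. max 0 (min 1 (s (X w))))"
definition "e1c = (\<lambda>w. max 0 (min 1 (e1 (X w))))"
abbreviation "E1 \<equiv> {w \<in> space M. G w = 1}"
abbreviation "N1 \<equiv> cond_on M (\<lambda>w. G w = 1)"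

lemmas [measurable] = measX measG measA measY0 measY1

lemma measY[measurable]: "Y \<in> borel_measurable M"
proof -
  have "(\<lambda>w. A w * Y1 w + (1 - A w) * Y0 w) \<in> borel_measurable M" by measurable
  then show ?thesis by (rule measurable_cong[THEN iffD1, rotated]) (use consistency in auto)
qed

lemma s_meas: "s \<in> borel_measurable borel" and e1_meas: "e1 \<in> borel_measurable borel"
  and mu1_meas: "mu1 \<in> borel_measurable borel" and mu0_meas: "mu0 \<in> borel_measurable borel"
  using s_def e1_def mu1_def mu0_def by (auto simp: is_cond_exp_fn_def)

lemma sc_F: "sc \<in> borel_measurable FX"
  unfolding sc_def by (rule Fmeas_comp) (use s_meas in measurable)
lemma e1c_F: "e1c \<in> borel_measurable FX"
  unfolding e1c_def by (rule Fmeas_comp) (use e1_meas in measurable)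
lemma sc_M[measurable]: "sc \<in> borel_measurable M"
  by (rule measurable_from_subalg[OF Fs.subalg sc_F])
lemma e1c_M[measurable]: "e1c \<in> borel_measurable M"
  by (rule measurable_from_subalg[OF Fs.subalg e1c_F])
lemma sc_b: "0 \<le> sc w \<and> sc w \<le> 1" by (simp add: sc_def)
lemma e1c_b: "0 \<le> e1c w \<and> e1c w \<le> 1" by (simp add: e1c_def)

lemma FX_M: "B \<in> sets FX \<Longrightarrow> B \<in> sets M"
  using Fs.subalg by (meson subalgebra_def subsetD)

lemma Gcases: "w \<in> space M \<Longrightarrow> G w = 0 \<or> G w = 1" and Acases: "w \<in> space M \<Longrightarrow> A w = 0 \<or> A w = 1"
  using binary by auto

lemma E1_sets[measurable]: "E1 \<in> sets M" by measurable
lemma E1_meas: "measure M E1 = q" by (simp add: q_def)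
lemma ind_E1: "w \<in> space M \<Longrightarrow> indicator E1 w = G w"
  using Gcases[of w] by (auto simp: indicator_def)

lemma N1_unif: "N1 = uniform_measure M E1" by (simp add: cond_on_def)
lemma N1_prob: "prob_space N1"
  unfolding N1_unif
  by (rule prob_space_uniform_measure) (use q_pos E1_meas in \<open>auto simp: emeasure_eq_measure\<close>)

lemma N1_integral:
  assumes [measurable]: "f \<in> borel_measurable M"
  shows "integral\<^sup>L N1 f = (\<integral>w. G w * f w \<partial>M) / q"
    and "integrable N1 f \<longleftrightarrow> integrable M (\<lambda>w. G w * f w)"
proof -
  have c: "(\<integral>w. indicator E1 w * f w \<partial>M) = (\<integral>w. G w * f w \<partial>M)"
    by (rule Bochner_Integration.integral_cong) (auto simp: ind_E1)
  have c2: "integrable M (\<lambda>w. indicator E1 w * f w) \<longleftrightarrow> integrable M (\<lambda>w. G w * f w)"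
    by (rule Bochner_Integration.integrable_cong) (auto simp: ind_E1)
  show "integral\<^sup>L N1 f = (\<integral>w. G w * f w \<partial>M) / q"
    unfolding N1_unif using unif_integral(1)[OF M E1_sets _ assms] q_pos E1_meas c by simp
  show "integrable N1 f \<longleftrightarrow> integrable M (\<lambda>w. G w * f w)"
    unfolding N1_unif using unif_integral(2)[OF M E1_sets _ assms] q_pos E1_meas c2 by simp
qed

lemma N1_AE: "(AE w in N1. P w) \<longleftrightarrow> (AE w in M. G w = 1 \<longrightarrow> P w)"
  unfolding N1_unif
  by (subst AE_uniform_measure) (use q_pos E1_meas in \<open>auto simp: emeasure_eq_measure\<close>)

lemma C1: "AE w in M. real_cond_exp M FX G w = sc w"
proof -
  have "AE w in M. s (X w) = real_cond_exp M FX G w" using s_def by (simp add: is_cond_exp_fn_def)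
  then show ?thesis using A2_pos unfolding sc_def by eventually_elim auto
qed


lemma int_bdd:
  fixes f g :: "'w \<Rightarrow> real" and C :: real
  assumes "integrable M f" "g \<in> borel_measurable M" "\<And>w. w \<in> space M \<Longrightarrow> \<bar>g w\<bar> \<le> C"
  shows "integrable M (\<lambda>w. g w * f w)"
proof (rule Bochner_Integration.integrable_bound[where f="\<lambda>w. C * f w"])
  show "integrable M (\<lambda>w. C * f w)" using assms(1) by simp
  show "(\<lambda>w. g w * f w) \<in> borel_measurable M" using assms(1,2) by measurable
  show "AE w in M. norm (g w * f w) \<le> norm (C * f w)"
  proof (rule AE_I2)
    fix w assume w: "w \<in> space M"
    have "\<bar>g w\<bar> * \<bar>f w\<bar> \<le> C * \<bar>f w\<bar>" using assms(3)[OF w] by (rule mult_right_mono) simp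
    moreover have "0 \<le> C" using assms(3)[OF w] by linarith
    ultimately show "norm (g w * f w) \<le> norm (C * f w)" by (simp add: abs_mult)
  qed
qed

lemma A2ext:
  assumes \<phi>: "\<phi> \<in> borel_measurable (borel :: (real \<times> real) measure)" and B: "B \<in> sets FX"
  shows "(\<integral>w. indicator B w * G w * \<phi> (Y0 w, Y1 w) \<partial>M) = (\<integral>w. indicator B w * sc w * \<phi> (Y0 w, Y1 w) \<partial>M)"
proof (rule ind_ext[OF M measX _ measG _ A2_indep sc_F _ C1 \<phi> B])
  show "(\<lambda>w. (Y0 w, Y1 w)) \<in> borel_measurable M" by measurable
qed (use binary sc_b in auto)

lemma C5:
  assumes \<phi>[measurable]: "\<phi> \<in> borel_measurable (borel :: (real \<times> real) measure)"
    and i: "integrable M (\<lambda>w. \<phi> (Y0 w, Y1 w))"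
  shows "AE w in M. real_cond_exp M FX (\<lambda>w. G w * \<phi> (Y0 w, Y1 w)) w
     = sc w * real_cond_exp M FX (\<lambda>w. \<phi> (Y0 w, Y1 w)) w"
proof (rule Fs.charact2)
  let ?Z = "\<lambda>w. \<phi> (Y0 w, Y1 w)"
  have ci: "integrable M (real_cond_exp M FX ?Z)" by (rule Fs.real_cond_exp_int(1)[OF i])
  show "integrable M (\<lambda>w. G w * ?Z w)"
    by (rule int_bdd[where C=1, OF i measG]) (use Gcases in force)
  show "integrable M (\<lambda>w. sc w * real_cond_exp M FX ?Z w)"
    by (rule int_bdd[where C=1, OF ci sc_M]) (use sc_b in force)
  show "(\<lambda>w. sc w * real_cond_exp M FX ?Z w) \<in> borel_measurable FX"
    using sc_F by measurable
  fix B assume B: "B \<in> sets FX"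
  have BM[measurable]: "B \<in> sets M" by (rule FX_M[OF B])
  have BF: "(\<lambda>w. indicator B w * sc w) \<in> borel_measurable FX" using B sc_F by measurable
  have iB: "integrable M (\<lambda>w. (indicator B w * sc w) * ?Z w)"
    by (rule int_bdd[where C=1, OF i]) (use sc_b in \<open>auto simp: indicator_def\<close>)
  have "(\<integral>w. indicator B w * (G w * ?Z w) \<partial>M) = (\<integral>w. indicator B w * G w * ?Z w \<partial>M)"
    by (simp add: mult.assoc)
  also have "\<dots> = (\<integral>w. (indicator B w * sc w) * ?Z w \<partial>M)"
    by (rule A2ext[OF \<phi> B])
  also have "\<dots> = (\<integral>w. (indicator B w * sc w) * real_cond_exp M FX ?Z w \<partial>M)"
    by (rule Fs.real_cond_exp_intg(2)[symmetric, OF iB BF]) measurable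
  also have "\<dots> = (\<integral>w. indicator B w * (sc w * real_cond_exp M FX ?Z w) \<partial>M)"
    by (simp add: mult.assoc)
  finally show "(\<integral>w. indicator B w * (G w * ?Z w) \<partial>M) = (\<integral>w. indicator B w * (sc w * real_cond_exp M FX ?Z w) \<partial>M)" .
qed

lemma C5_1: "AE w in M. real_cond_exp M FX (\<lambda>w. G w * Y1 w) w = sc w * c1 w"
proof -
  have "(snd :: real \<times> real \<Rightarrow> real) \<in> borel_measurable borel" by (intro borel_measurable_continuous_onI continuous_intros)
  from C5[OF this] int_Y1 show ?thesis by simp
qed
lemma C5_0: "AE w in M. real_cond_exp M FX (\<lambda>w. G w * Y0 w) w = sc w * c0 w"
proof -
  have "(fst :: real \<times> real \<Rightarrow> real) \<in> borel_measurable borel" by (intro borel_measurable_continuous_onI continuous_intros)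
  from C5[OF this] int_Y0 show ?thesis by simp
qed


lemma int_bounded:
  fixes g :: "'w \<Rightarrow> real"
  assumes "g \<in> borel_measurable M" "\<And>w. w \<in> space M \<Longrightarrow> \<bar>g w\<bar> \<le> C"
  shows "integrable M g"
  using int_bdd[of "\<lambda>_. 1" g C] assms by simp

lemma pos_integral:
  fixes f :: "'w \<Rightarrow> real"
  assumes "integrable M f" "AE w in M. 0 < f w"
  shows "0 < integral\<^sup>L M f"
proof -
  have nn: "AE w in M. 0 \<le> f w" using assms(2) by eventually_elim auto
  have ge: "0 \<le> integral\<^sup>L M f" using nn by (rule integral_nonneg_AE)
  have "integral\<^sup>L M f \<noteq> 0"
  proof
    assume "integral\<^sup>L M f = 0"
    then have "AE w in M. f w = 0" using integral_nonneg_eq_0_iff_AE[OF assms(1) nn] by simp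
    with assms(2) have "AE w in M. False" by eventually_elim auto
    then show False by (simp add: AE_False)
  qed
  with ge show ?thesis by simp
qed

lemma N1_sets[simp]: "sets N1 = sets M" and N1_space[simp]: "space N1 = space M"
  by (simp_all add: cond_on_def)

lemma N1_meas: "f \<in> measurable M K \<Longrightarrow> f \<in> measurable N1 K"
proof -
  have "measurable N1 K = measurable M K" by (rule measurable_cong_sets) simp_all
  then show "f \<in> measurable M K \<Longrightarrow> f \<in> measurable N1 K" by simp
qed

lemma N1_sigma: "sigma_of N1 borel X = FX"
  by (simp add: cond_on_def sigma_of_unif)

lemma e1_N1: "AE w in N1. real_cond_exp N1 FX A w = e1c w"
proof -
  have "AE w in N1. e1 (X w) = real_cond_exp N1 FX A w"
    using e1_def N1_sigma by (simp add: is_cond_exp_fn_def)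
  moreover have "AE w in N1. 0 < e1 (X w) \<and> e1 (X w) < 1"
    unfolding N1_AE by (rule A1_pos)
  ultimately show ?thesis unfolding e1c_def by eventually_elim auto
qed

lemma A1ext:
  assumes \<phi>[measurable]: "\<phi> \<in> borel_measurable (borel :: (real \<times> real) measure)" and B: "B \<in> sets FX"
  shows "(\<integral>w. indicator B w * G w * A w * \<phi> (Y1 w, Y0 w) \<partial>M) = (\<integral>w. indicator B w * G w * e1c w * \<phi> (Y1 w, Y0 w) \<partial>M)"
proof -
  have BM[measurable]: "B \<in> sets M" by (rule FX_M[OF B])
  have "(\<integral>w. indicator B w * A w * \<phi> (Y1 w, Y0 w) \<partial>N1) = (\<integral>w. indicator B w * e1c w * \<phi> (Y1 w, Y0 w) \<partial>N1)"
  proof (rule ind_ext[OF N1_prob, of X "\<lambda>w. (Y1 w, Y0 w)" borel A e1c \<phi> B, unfolded N1_sigma])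
    show "X \<in> borel_measurable N1" by (rule N1_meas) measurable
    show "(\<lambda>w. (Y1 w, Y0 w)) \<in> borel_measurable N1" by (rule N1_meas) measurable
    show "A \<in> borel_measurable N1" by (rule N1_meas) measurable
    show "\<forall>w\<in>space N1. A w \<in> {0, 1}" using binary by simp
    show "cond_indep N1 borel (\<lambda>w. (Y1 w, Y0 w)) borel A borel X" by (rule A1_indep)
    show "e1c \<in> borel_measurable FX" by (rule e1c_F)
    show "\<And>w. 0 \<le> e1c w \<and> e1c w \<le> 1" by (rule e1c_b)
    show "AE w in N1. real_cond_exp N1 FX A w = e1c w" by (rule e1_N1)
    show "\<phi> \<in> borel_measurable borel" by (rule \<phi>)
    show "B \<in> sets FX" by (rule B)
  qed
  then have "(\<integral>w. G w * (indicator B w * A w * \<phi> (Y1 w, Y0 w)) \<partial>M) / q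
      = (\<integral>w. G w * (indicator B w * e1c w * \<phi> (Y1 w, Y0 w)) \<partial>M) / q"
    by (simp add: N1_integral(1))
  then show ?thesis using q_pos by (simp add: ac_simps)
qed


lemma sc_e1c_F: "(\<lambda>w. sc w * e1c w) \<in> borel_measurable FX"
  using sc_F e1c_F by measurable

lemma C2: "AE w in M. real_cond_exp M FX (\<lambda>w. G w * A w) w = sc w * e1c w"
proof (rule Fs.charact2)
  show "integrable M (\<lambda>w. G w * A w)"
    by (rule int_bounded[where C=1]) (use binary in auto)
  show "integrable M (\<lambda>w. sc w * e1c w)"
    by (rule int_bounded[where C=1]) (use sc_b e1c_b in \<open>auto simp: abs_mult intro: mult_le_one\<close>)
  show "(\<lambda>w. sc w * e1c w) \<in> borel_measurable FX" by (rule sc_e1c_F)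
  fix B assume B: "B \<in> sets FX"
  have BM[measurable]: "B \<in> sets M" by (rule FX_M[OF B])
  have BF: "(\<lambda>w. indicator B w * e1c w) \<in> borel_measurable FX" using B e1c_F by measurable
  have one: "(\<lambda>p. 1 :: real) \<in> borel_measurable (borel :: (real \<times> real) measure)" by simp
  have iB: "integrable M (\<lambda>w. (indicator B w * e1c w) * G w)"
    by (rule int_bounded[where C=1]) (use binary e1c_b in \<open>auto simp: indicator_def\<close>)
  have "(\<integral>w. indicator B w * (G w * A w) \<partial>M) = (\<integral>w. indicator B w * G w * A w * 1 \<partial>M)"
    by (simp add: mult.assoc)
  also have "\<dots> = (\<integral>w. indicator B w * G w * e1c w * 1 \<partial>M)"
    using A1ext[OF one B] by simp
  also have "\<dots> = (\<integral>w. (indicator B w * e1c w) * G w \<partial>M)"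
    by (simp add: ac_simps)
  also have "\<dots> = (\<integral>w. (indicator B w * e1c w) * real_cond_exp M FX G w \<partial>M)"
    by (rule Fs.real_cond_exp_intg(2)[symmetric, OF iB BF]) measurable
  also have "\<dots> = (\<integral>w. (indicator B w * e1c w) * sc w \<partial>M)"
    by (rule integral_cong_AE) (use C1 in \<open>auto elim!: eventually_mono\<close>)
  also have "\<dots> = (\<integral>w. indicator B w * (sc w * e1c w) \<partial>M)"
    by (simp add: ac_simps)
  finally show "(\<integral>w. indicator B w * (G w * A w) \<partial>M) = (\<integral>w. indicator B w * (sc w * e1c w) \<partial>M)" .
qed

lemma C3:
  assumes \<phi>[measurable]: "\<phi> \<in> borel_measurable (borel :: (real \<times> real) measure)"
    and i: "integrable M (\<lambda>w. \<phi> (Y1 w, Y0 w))"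
  shows "AE w in M. real_cond_exp M FX (\<lambda>w. G w * A w * \<phi> (Y1 w, Y0 w)) w
     = sc w * e1c w * real_cond_exp M FX (\<lambda>w. \<phi> (Y1 w, Y0 w)) w"
proof (rule Fs.charact2)
  let ?Z = "\<lambda>w. \<phi> (Y1 w, Y0 w)"
  have ci: "integrable M (real_cond_exp M FX ?Z)" by (rule Fs.real_cond_exp_int(1)[OF i])
  show "integrable M (\<lambda>w. G w * A w * ?Z w)"
    by (rule int_bdd[where C=1, OF i]) (use binary in auto)
  show "integrable M (\<lambda>w. sc w * e1c w * real_cond_exp M FX ?Z w)"
    by (rule int_bdd[where C=1, OF ci]) (use sc_b e1c_b in \<open>auto simp: abs_mult intro: mult_le_one\<close>)
  show "(\<lambda>w. sc w * e1c w * real_cond_exp M FX ?Z w) \<in> borel_measurable FX"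
    using sc_F e1c_F by measurable
  fix B assume B: "B \<in> sets FX"
  have BM[measurable]: "B \<in> sets M" by (rule FX_M[OF B])
  have BF: "(\<lambda>w. indicator B w * e1c w) \<in> borel_measurable FX" using B e1c_F by measurable
  have \<psi>: "(\<lambda>p. \<phi> (snd p, fst p)) \<in> borel_measurable (borel :: (real \<times> real) measure)"
  proof -
    have "(\<lambda>p::real\<times>real. (snd p, fst p)) \<in> borel_measurable borel"
      by (intro borel_measurable_continuous_onI continuous_intros)
    then show ?thesis using \<phi> by (rule measurable_compose)
  qed
  have C5': "AE w in M. real_cond_exp M FX (\<lambda>w. G w * ?Z w) w = sc w * real_cond_exp M FX ?Z w"
    using C5[OF \<psi>] i by simp
  have iB0: "integrable M (\<lambda>w. (indicator B w * e1c w * G w) * ?Z w)"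
    by (rule int_bdd[where C=1, OF i]) (use binary e1c_b in \<open>auto simp: indicator_def\<close>)
  have iB: "integrable M (\<lambda>w. (indicator B w * e1c w) * (G w * ?Z w))"
    using iB0 by (simp add: ac_simps)
  have "(\<integral>w. indicator B w * (G w * A w * ?Z w) \<partial>M) = (\<integral>w. indicator B w * G w * A w * ?Z w \<partial>M)"
    by (simp add: ac_simps)
  also have "\<dots> = (\<integral>w. indicator B w * G w * e1c w * ?Z w \<partial>M)"
    by (rule A1ext[OF \<phi> B])
  also have "\<dots> = (\<integral>w. (indicator B w * e1c w) * (G w * ?Z w) \<partial>M)"
    by (simp add: ac_simps)
  also have "\<dots> = (\<integral>w. (indicator B w * e1c w) * real_cond_exp M FX (\<lambda>w. G w * ?Z w) w \<partial>M)"
    by (rule Fs.real_cond_exp_intg(2)[symmetric, OF iB BF]) measurable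
  also have "\<dots> = (\<integral>w. (indicator B w * e1c w) * (sc w * real_cond_exp M FX ?Z w) \<partial>M)"
    by (rule integral_cong_AE) (use C5' in \<open>auto elim!: eventually_mono\<close>)
  also have "\<dots> = (\<integral>w. indicator B w * (sc w * e1c w * real_cond_exp M FX ?Z w) \<partial>M)"
    by (simp add: ac_simps)
  finally show "(\<integral>w. indicator B w * (G w * A w * ?Z w) \<partial>M) = (\<integral>w. indicator B w * (sc w * e1c w * real_cond_exp M FX ?Z w) \<partial>M)" .
qed

lemma C3_1: "AE w in M. real_cond_exp M FX (\<lambda>w. G w * A w * Y1 w) w = sc w * e1c w * c1 w"
proof -
  have "(fst :: real \<times> real \<Rightarrow> real) \<in> borel_measurable borel" by (intro borel_measurable_continuous_onI continuous_intros)
  from C3[OF this] int_Y1 show ?thesis by simp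
qed
lemma C3_0: "AE w in M. real_cond_exp M FX (\<lambda>w. G w * A w * Y0 w) w = sc w * e1c w * c0 w"
proof -
  have "(snd :: real \<times> real \<Rightarrow> real) \<in> borel_measurable borel" by (intro borel_measurable_continuous_onI continuous_intros)
  from C3[OF this] int_Y0 show ?thesis by simp
qed


lemma e1_pos_M: "AE w in M. 0 < e1 (X w) \<and> e1 (X w) < 1"
proof -
  define D where "D = {w \<in> space M. \<not> (0 < e1 (X w) \<and> e1 (X w) < 1)}"
  have spFX: "space FX = space M" by (simp add: sigma_of_def)
  have DF: "D \<in> sets FX"
  proof -
    have [measurable]: "(\<lambda>w. e1 (X w)) \<in> borel_measurable FX" by (rule Fmeas_comp[OF e1_meas])
    have "{w \<in> space FX. \<not> (0 < e1 (X w) \<and> e1 (X w) < 1)} \<in> sets FX" by measurable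
    then show ?thesis by (simp add: D_def spFX)
  qed
  have DM[measurable]: "D \<in> sets M" by (rule FX_M[OF DF])
  have iD: "integrable M (\<lambda>w. indicator D w * G w)"
    by (rule int_bounded[where C=1]) (use binary in \<open>auto simp: indicator_def\<close>)
  have iDs: "integrable M (\<lambda>w. indicator D w * sc w)"
    by (rule int_bounded[where C=1]) (use sc_b in \<open>auto simp: indicator_def\<close>)
  have "(\<integral>w. indicator D w * G w \<partial>M) = (\<integral>w. indicator D w * real_cond_exp M FX G w \<partial>M)"
    by (rule Fs.real_cond_exp_intg(2)[symmetric, OF iD]) (use DF in measurable)
  also have "\<dots> = (\<integral>w. indicator D w * sc w \<partial>M)"
    by (rule integral_cong_AE) (use C1 in \<open>auto elim!: eventually_mono\<close>)
  finally have eq: "(\<integral>w. indicator D w * G w \<partial>M) = (\<integral>w. indicator D w * sc w \<partial>M)" .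
  have "AE w in M. indicator D w * G w = 0"
    using A1_pos
  proof (rule AE_mp[OF _ AE_I2], intro impI)
    fix w assume w: "w \<in> space M" and H: "G w = 1 \<longrightarrow> 0 < e1 (X w) \<and> e1 (X w) < 1"
    show "indicator D w * G w = 0" using Gcases[OF w] H by (auto simp: D_def indicator_def)
  qed
  then have "(\<integral>w. indicator D w * G w \<partial>M) = 0" by (simp add: integral_eq_zero_AE)
  with eq have "(\<integral>w. indicator D w * sc w \<partial>M) = 0" by simp
  then have "AE w in M. indicator D w * sc w = 0"
    using integral_nonneg_eq_0_iff_AE[OF iDs] sc_b by (auto simp: indicator_def)
  then show ?thesis using A2_pos
  proof (rule AE_mp[OF _ AE_mp[OF _ AE_I2]], intro impI)
    fix w assume w: "w \<in> space M" and p: "0 < s (X w) \<and> s (X w) < 1" and z: "indicator D w * sc w = 0"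
    have "sc w > 0" using p by (simp add: sc_def)
    with z have "w \<notin> D" by (auto simp: indicator_def)
    with w show "0 < e1 (X w) \<and> e1 (X w) < 1" by (simp add: D_def)
  qed
qed

lemma e1c_eq: "AE w in M. e1c w = e1 (X w) \<and> 0 < e1c w \<and> e1c w < 1"
  using e1_pos_M by eventually_elim (auto simp: e1c_def)

lemma sc_eq: "AE w in M. sc w = s (X w) \<and> 0 < sc w \<and> sc w < 1"
  using A2_pos by eventually_elim (auto simp: sc_def)

lemma int_GA: "(\<integral>w. G w * A w \<partial>M) = (\<integral>w. sc w * e1c w \<partial>M)"
proof -
  have i: "integrable M (\<lambda>w. G w * A w)"
    by (rule int_bounded[where C=1]) (use binary in auto)
  have "(\<integral>w. G w * A w \<partial>M) = (\<integral>w. real_cond_exp M FX (\<lambda>w. G w * A w) w \<partial>M)"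
    by (rule Fs.real_cond_exp_int(2)[OF i, symmetric])
  also have "\<dots> = (\<integral>w. sc w * e1c w \<partial>M)"
    by (rule integral_cong_AE) (use C2 in \<open>auto elim!: eventually_mono\<close>)
  finally show ?thesis .
qed

lemma P11_pos: "0 < measure M {w \<in> space M. A w = 1 \<and> G w = 1}"
proof -
  have "measure M {w \<in> space M. A w = 1 \<and> G w = 1} = (\<integral>w. indicator {w \<in> space M. A w = 1 \<and> G w = 1} w \<partial>M)"
    by simp
  also have "\<dots> = (\<integral>w. G w * A w \<partial>M)"
    by (rule Bochner_Integration.integral_cong) (use binary in \<open>auto simp: indicator_def\<close>)
  also have "\<dots> = (\<integral>w. sc w * e1c w \<partial>M)" by (rule int_GA)
  also have "\<dots> > 0"
  proof (rule pos_integral)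
    show "integrable M (\<lambda>w. sc w * e1c w)"
      by (rule int_bounded[where C=1]) (use sc_b e1c_b in \<open>auto simp: abs_mult intro: mult_le_one\<close>)
    show "AE w in M. 0 < sc w * e1c w" using sc_eq e1c_eq by eventually_elim auto
  qed
  finally show ?thesis .
qed

lemma P10_pos: "0 < measure M {w \<in> space M. A w = 0 \<and> G w = 1}"
proof -
  have iG: "integrable M G" by (rule int_bounded[where C=1]) (use binary in auto)
  have iGA: "integrable M (\<lambda>w. G w * A w)" by (rule int_bounded[where C=1]) (use binary in auto)
  have isc: "integrable M sc" by (rule int_bounded[where C=1]) (use sc_b in auto)
  have isce: "integrable M (\<lambda>w. sc w * e1c w)"
    by (rule int_bounded[where C=1]) (use sc_b e1c_b in \<open>auto simp: abs_mult intro: mult_le_one\<close>)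
  have intG: "(\<integral>w. G w \<partial>M) = (\<integral>w. sc w \<partial>M)"
  proof -
    have "(\<integral>w. G w \<partial>M) = (\<integral>w. real_cond_exp M FX G w \<partial>M)"
      by (rule Fs.real_cond_exp_int(2)[OF iG, symmetric])
    also have "\<dots> = (\<integral>w. sc w \<partial>M)"
      by (rule integral_cong_AE) (use C1 in \<open>auto elim!: eventually_mono\<close>)
    finally show ?thesis .
  qed
  have "measure M {w \<in> space M. A w = 0 \<and> G w = 1} = (\<integral>w. indicator {w \<in> space M. A w = 0 \<and> G w = 1} w \<partial>M)"
    by simp
  also have "\<dots> = (\<integral>w. G w - G w * A w \<partial>M)"
    by (rule Bochner_Integration.integral_cong) (use binary in \<open>auto simp: indicator_def\<close>)
  also have "\<dots> = (\<integral>w. sc w \<partial>M) - (\<integral>w. sc w * e1c w \<partial>M)"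
    using iG iGA intG int_GA by simp
  also have "\<dots> = (\<integral>w. sc w - sc w * e1c w \<partial>M)"
    using isc isce by simp
  also have "\<dots> > 0"
  proof (rule pos_integral)
    show "integrable M (\<lambda>w. sc w - sc w * e1c w)" using isc isce by simp
    show "AE w in M. 0 < sc w - sc w * e1c w" using sc_eq e1c_eq
      by eventually_elim (auto simp: algebra_simps)
  qed
  finally show ?thesis .
qed


lemma int_Y: "integrable M Y"
proof -
  have "integrable M (\<lambda>w. A w * Y1 w + (1 - A w) * Y0 w)"
  proof (rule Bochner_Integration.integrable_add)
    show "integrable M (\<lambda>w. A w * Y1 w)" by (rule int_bdd[where C=1, OF int_Y1 measA]) (use binary in auto)
    show "integrable M (\<lambda>w. (1 - A w) * Y0 w)" by (rule int_bdd[where C=1, OF int_Y0]) (use binary in auto)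
  qed
  then show ?thesis by (rule Bochner_Integration.integrable_cong[THEN iffD1, rotated 2]) (use consistency in auto)
qed

lemma mu_generic:
  fixes P :: "'w \<Rightarrow> bool" and H Yj r :: "'w \<Rightarrow> real" and mu :: "real ^ 'p \<Rightarrow> real"
  assumes Pm[measurable]: "Measurable.pred M P"
    and pos: "0 < measure M {w \<in> space M. P w}"
    and H: "\<And>w. w \<in> space M \<Longrightarrow> indicator {w \<in> space M. P w} w = H w"
    and Hm[measurable]: "H \<in> borel_measurable M"
    and HY: "\<And>w. w \<in> space M \<Longrightarrow> H w * Y w = H w * Yj w"
    and iYj: "integrable M Yj"
    and mud: "is_cond_exp_fn (cond_on M P) X Y mu"
    and rH: "AE w in M. real_cond_exp M FX H w = r w"
    and rHY: "AE w in M. real_cond_exp M FX (\<lambda>w. H w * Yj w) w = r w * real_cond_exp M FX Yj w"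
    and rpos: "AE w in M. r w \<noteq> 0"
  shows "AE w in M. mu (X w) = real_cond_exp M FX Yj w"
proof -
  let ?E = "{w \<in> space M. P w}"
  let ?N = "cond_on M P"
  let ?p = "measure M ?E"
  have Es[measurable]: "?E \<in> sets M" by measurable
  have Nu: "?N = uniform_measure M ?E" by (simp add: cond_on_def)
  have Nprob: "prob_space ?N" unfolding Nu
    by (rule prob_space_uniform_measure) (use pos in \<open>auto simp: emeasure_eq_measure\<close>)
  have Nsig: "sigma_of ?N borel X = FX" by (simp add: cond_on_def sigma_of_unif)
  have Nmeas: "f \<in> measurable M K \<Longrightarrow> f \<in> measurable ?N K" for f and K :: "'z measure"
  proof -
    have "measurable ?N K = measurable M K" by (rule measurable_cong_sets) (simp_all add: cond_on_def)
    then show "f \<in> measurable M K \<Longrightarrow> f \<in> measurable ?N K" by simp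
  qed
  have XN: "X \<in> borel_measurable ?N" by (rule Nmeas) measurable
  interpret NF: sigma_finite_subalgebra ?N FX using sfs_sigma_of[OF Nprob XN] Nsig by simp
  have mum: "mu \<in> borel_measurable borel" using mud by (simp add: is_cond_exp_fn_def)
  have muF: "(\<lambda>w. mu (X w)) \<in> borel_measurable FX" by (rule Fmeas_comp[OF mum])
  have muM[measurable]: "(\<lambda>w. mu (X w)) \<in> borel_measurable M" using mum by measurable
  have aeN: "AE w in ?N. mu (X w) = real_cond_exp ?N FX Y w"
    using mud Nsig by (simp add: is_cond_exp_fn_def)
  have NI: "integral\<^sup>L ?N f = (\<integral>w. indicator ?E w * f w \<partial>M) / ?p"
    and NI2: "integrable ?N f \<longleftrightarrow> integrable M (\<lambda>w. indicator ?E w * f w)"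
    if [measurable]: "f \<in> borel_measurable M" for f
    using unif_integral[OF M Es pos that] Nu by simp_all
  have iYN: "integrable ?N Y"
    using NI2[of Y] int_bdd[where C=1, OF int_Y, of "indicator ?E"] by (auto simp: indicator_def)
  have imuN: "integrable ?N (\<lambda>w. mu (X w))"
  proof -
    have "integrable ?N (real_cond_exp ?N FX Y)" by (rule NF.real_cond_exp_int(1)[OF iYN])
    then show ?thesis
      by (rule integrable_cong_AE_imp) (use aeN XN mum in \<open>auto elim!: eventually_mono\<close>)
  qed
  have imuM: "integrable M (\<lambda>w. H w * mu (X w))"
  proof -
    have "integrable M (\<lambda>w. indicator ?E w * mu (X w))" using imuN NI2 by simp
    then show ?thesis by (rule Bochner_Integration.integrable_cong[THEN iffD1, rotated 2]) (use H in auto)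
  qed
  have Hb: "\<bar>H w\<bar> \<le> 1" if w: "w \<in> space M" for w
  proof -
    have "H w = indicator ?E w" using H[OF w] by simp
    then show ?thesis by (simp add: indicator_def)
  qed
  have iHY: "integrable M (\<lambda>w. H w * Yj w)"
    by (rule int_bdd[where C=1, OF iYj Hm Hb])
  have eqB: "(\<integral>w. indicator B w * (H w * Yj w) \<partial>M) = (\<integral>w. indicator B w * (H w * mu (X w)) \<partial>M)"
    if B: "B \<in> sets FX" for B
  proof -
    have BM[measurable]: "B \<in> sets M" by (rule FX_M[OF B])
    have BF: "(\<lambda>w. indicator B w :: real) \<in> borel_measurable FX" using B by measurable
    have iBN: "integrable ?N (\<lambda>w. indicator B w * Y w)"
      using integrable_mult_indicator[of B ?N Y] iYN BM by (simp add: cond_on_def)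
    have "(\<integral>w. indicator B w * Y w \<partial>?N) = (\<integral>w. indicator B w * real_cond_exp ?N FX Y w \<partial>?N)"
      by (rule NF.real_cond_exp_intg(2)[symmetric, OF iBN BF]) (rule Nmeas, measurable)
    also have "\<dots> = (\<integral>w. indicator B w * mu (X w) \<partial>?N)"
      apply (rule integral_cong_AE)
      using BM apply (simp add: cond_on_def)
       apply (rule Nmeas, measurable)
      using aeN by eventually_elim simp
    finally have "(\<integral>w. indicator B w * Y w \<partial>?N) = (\<integral>w. indicator B w * mu (X w) \<partial>?N)" .
    then have "(\<integral>w. indicator ?E w * (indicator B w * Y w) \<partial>M) / ?p = (\<integral>w. indicator ?E w * (indicator B w * mu (X w)) \<partial>M) / ?p"
      by (simp add: NI)
    then have "(\<integral>w. indicator ?E w * (indicator B w * Y w) \<partial>M) = (\<integral>w. indicator ?E w * (indicator B w * mu (X w)) \<partial>M)"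
      using pos by simp
    moreover have "(\<integral>w. indicator ?E w * (indicator B w * Y w) \<partial>M) = (\<integral>w. indicator B w * (H w * Yj w) \<partial>M)"
      by (rule Bochner_Integration.integral_cong) (use H HY in \<open>auto simp: ac_simps\<close>)
    moreover have "(\<integral>w. indicator ?E w * (indicator B w * mu (X w)) \<partial>M) = (\<integral>w. indicator B w * (H w * mu (X w)) \<partial>M)"
      by (rule Bochner_Integration.integral_cong) (use H in \<open>auto simp: ac_simps\<close>)
    ultimately show ?thesis by simp
  qed
  have r1: "AE w in M. real_cond_exp M FX (\<lambda>w. H w * Yj w) w = real_cond_exp M FX (\<lambda>w. H w * mu (X w)) w"
  proof (rule Fs.charact2)
    show "integrable M (\<lambda>w. H w * Yj w)" by (rule iHY)
    show "integrable M (real_cond_exp M FX (\<lambda>w. H w * mu (X w)))" by (rule Fs.real_cond_exp_int(1)[OF imuM])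
    show "real_cond_exp M FX (\<lambda>w. H w * mu (X w)) \<in> borel_measurable FX" by simp
    fix B assume B: "B \<in> sets FX"
    have BF: "(\<lambda>w. indicator B w :: real) \<in> borel_measurable FX" using B by measurable
    have iB: "integrable M (\<lambda>w. indicator B w * (H w * mu (X w)))"
      by (rule int_bdd[where C=1, OF imuM]) (use B FX_M in \<open>auto simp: indicator_def\<close>)
    show "(\<integral>w. indicator B w * (H w * Yj w) \<partial>M) = (\<integral>w. indicator B w * real_cond_exp M FX (\<lambda>w. H w * mu (X w)) w \<partial>M)"
      using eqB[OF B] Fs.real_cond_exp_intg(2)[OF iB BF] by simp
  qed
  have r2: "AE w in M. real_cond_exp M FX (\<lambda>w. mu (X w) * H w) w = mu (X w) * real_cond_exp M FX H w"
    by (rule Fs.real_cond_exp_mult[OF muF Hm]) (use imuM in \<open>simp add: mult.commute\<close>)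
  show ?thesis using r1 r2 rH rHY rpos by eventually_elim (auto simp: mult.commute)
qed


lemma C6_1: "AE w in M. mu1 (X w) = c1 w"
proof (rule mu_generic[where P="\<lambda>w. A w = 1 \<and> G w = 1" and H="\<lambda>w. G w * A w" and r="\<lambda>w. sc w * e1c w"])
  show "Measurable.pred M (\<lambda>w. A w = 1 \<and> G w = 1)" by measurable
  show "0 < measure M {w \<in> space M. A w = 1 \<and> G w = 1}" by (rule P11_pos)
  show "indicator {w \<in> space M. A w = 1 \<and> G w = 1} w = G w * A w" if "w \<in> space M" for w
    using binary that by (auto simp: indicator_def)
  show "(\<lambda>w. G w * A w) \<in> borel_measurable M" by measurable
  show "G w * A w * Y w = G w * A w * Y1 w" if "w \<in> space M" for w
    using binary consistency that by auto
  show "integrable M Y1" by (rule int_Y1)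
  show "is_cond_exp_fn (cond_on M (\<lambda>w. A w = 1 \<and> G w = 1)) X Y mu1" by (rule mu1_def)
  show "AE w in M. real_cond_exp M FX (\<lambda>w. G w * A w) w = sc w * e1c w" by (rule C2)
  show "AE w in M. real_cond_exp M FX (\<lambda>w. G w * A w * Y1 w) w = sc w * e1c w * c1 w" by (rule C3_1)
  show "AE w in M. sc w * e1c w \<noteq> 0" using sc_eq e1c_eq by eventually_elim auto
qed

lemma iG: "integrable M G" by (rule int_bounded[where C=1]) (use binary in auto)
lemma iGA: "integrable M (\<lambda>w. G w * A w)" by (rule int_bounded[where C=1]) (use binary in auto)
lemma iGY0: "integrable M (\<lambda>w. G w * Y0 w)" by (rule int_bdd[where C=1, OF int_Y0 measG]) (use binary in auto)
lemma iGY1: "integrable M (\<lambda>w. G w * Y1 w)" by (rule int_bdd[where C=1, OF int_Y1 measG]) (use binary in auto)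
lemma iGAY0: "integrable M (\<lambda>w. G w * A w * Y0 w)" by (rule int_bdd[where C=1, OF int_Y0]) (use binary in auto)
lemma iGAY1: "integrable M (\<lambda>w. G w * A w * Y1 w)" by (rule int_bdd[where C=1, OF int_Y1]) (use binary in auto)

lemma C7: "AE w in M. real_cond_exp M FX (\<lambda>w. G w * (1 - A w)) w = sc w - sc w * e1c w"
proof -
  have "AE w in M. real_cond_exp M FX (\<lambda>w. G w * (1 - A w)) w = real_cond_exp M FX (\<lambda>w. G w - G w * A w) w"
    by (rule Fs.real_cond_exp_cong) (auto simp: algebra_simps)
  moreover have "AE w in M. real_cond_exp M FX (\<lambda>w. G w - G w * A w) w = real_cond_exp M FX G w - real_cond_exp M FX (\<lambda>w. G w * A w) w"
    by (rule Fs.real_cond_exp_diff[OF iG iGA])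
  ultimately show ?thesis using C1 C2 by eventually_elim simp
qed

lemma C8: "AE w in M. real_cond_exp M FX (\<lambda>w. G w * (1 - A w) * Y0 w) w = (sc w - sc w * e1c w) * c0 w"
proof -
  have "AE w in M. real_cond_exp M FX (\<lambda>w. G w * (1 - A w) * Y0 w) w = real_cond_exp M FX (\<lambda>w. G w * Y0 w - G w * A w * Y0 w) w"
    by (rule Fs.real_cond_exp_cong) (auto simp: algebra_simps)
  moreover have "AE w in M. real_cond_exp M FX (\<lambda>w. G w * Y0 w - G w * A w * Y0 w) w = real_cond_exp M FX (\<lambda>w. G w * Y0 w) w - real_cond_exp M FX (\<lambda>w. G w * A w * Y0 w) w"
    by (rule Fs.real_cond_exp_diff[OF iGY0 iGAY0])
  ultimately show ?thesis using C5_0 C3_0 by eventually_elim (simp add: algebra_simps)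
qed

lemma C6_0: "AE w in M. mu0 (X w) = c0 w"
proof (rule mu_generic[where P="\<lambda>w. A w = 0 \<and> G w = 1" and H="\<lambda>w. G w * (1 - A w)" and r="\<lambda>w. sc w - sc w * e1c w"])
  show "Measurable.pred M (\<lambda>w. A w = 0 \<and> G w = 1)" by measurable
  show "0 < measure M {w \<in> space M. A w = 0 \<and> G w = 1}" by (rule P10_pos)
  show "indicator {w \<in> space M. A w = 0 \<and> G w = 1} w = G w * (1 - A w)" if "w \<in> space M" for w
    using binary that by (auto simp: indicator_def)
  show "(\<lambda>w. G w * (1 - A w)) \<in> borel_measurable M" by measurable
  show "G w * (1 - A w) * Y w = G w * (1 - A w) * Y0 w" if "w \<in> space M" for w
    using binary consistency that by auto
  show "integrable M Y0" by (rule int_Y0)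
  show "is_cond_exp_fn (cond_on M (\<lambda>w. A w = 0 \<and> G w = 1)) X Y mu0" by (rule mu0_def)
  show "AE w in M. real_cond_exp M FX (\<lambda>w. G w * (1 - A w)) w = sc w - sc w * e1c w" by (rule C7)
  show "AE w in M. real_cond_exp M FX (\<lambda>w. G w * (1 - A w) * Y0 w) w = (sc w - sc w * e1c w) * c0 w" by (rule C8)
  show "AE w in M. sc w - sc w * e1c w \<noteq> 0" using sc_eq e1c_eq by eventually_elim (auto simp: algebra_simps)
qed


lemma key_j:
  fixes b Yj :: "'w \<Rightarrow> real"
  assumes bF: "b \<in> borel_measurable FX" and bb: "\<And>w. \<bar>b w\<bar> \<le> 1"
    and iYj: "integrable M Yj" and rc: "AE w in M. real_cond_exp M FX (\<lambda>w. G w * Yj w) w = sc w * real_cond_exp M FX Yj w"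
  shows "(\<integral>w. (1 - G w) * b w * Yj w \<partial>M) = (\<integral>w. (1 - G w) * b w * real_cond_exp M FX Yj w \<partial>M)"
    and "integrable M (\<lambda>w. (1 - G w) * b w * real_cond_exp M FX Yj w)"
proof -
  let ?c = "real_cond_exp M FX Yj"
  have bM[measurable]: "b \<in> borel_measurable M" by (rule measurable_from_subalg[OF Fs.subalg bF])
  have Ym[measurable]: "Yj \<in> borel_measurable M" using iYj by auto
  have ic: "integrable M ?c" by (rule Fs.real_cond_exp_int(1)[OF iYj])
  have bcF: "(\<lambda>w. b w * ?c w) \<in> borel_measurable FX" using bF by measurable
  have GB: "\<And>w. w \<in> space M \<Longrightarrow> \<bar>G w\<bar> \<le> 1" "\<And>w. w \<in> space M \<Longrightarrow> \<bar>1 - G w\<bar> \<le> 1"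
    using binary by auto
  have i1: "integrable M (\<lambda>w. b w * Yj w)" by (rule int_bdd[where C=1, OF iYj bM]) (use bb in auto)
  have i2': "integrable M (\<lambda>w. (b w * G w) * Yj w)"
    by (rule int_bdd[where C=1, OF iYj]) (use bb GB in \<open>auto simp: abs_mult intro: mult_le_one\<close>)
  have i2: "integrable M (\<lambda>w. b w * (G w * Yj w))" using i2' by (simp add: ac_simps)
  have i3': "integrable M (\<lambda>w. (b w * G w) * ?c w)"
    by (rule int_bdd[where C=1, OF ic]) (use bb GB in \<open>auto simp: abs_mult intro: mult_le_one\<close>)
  have i3: "integrable M (\<lambda>w. (b w * ?c w) * G w)" using i3' by (simp add: ac_simps)
  have i4': "integrable M (\<lambda>w. ((1 - G w) * b w) * ?c w)"
    by (rule int_bdd[where C=1, OF ic]) (use bb GB in \<open>auto simp: abs_mult intro: mult_le_one\<close>)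
  then show "integrable M (\<lambda>w. (1 - G w) * b w * ?c w)" by simp
  have i5: "integrable M (\<lambda>w. b w * ?c w)" by (rule int_bdd[where C=1, OF ic bM]) (use bb in auto)
  have e1: "(\<integral>w. b w * Yj w \<partial>M) = (\<integral>w. b w * ?c w \<partial>M)"
    by (rule Fs.real_cond_exp_intg(2)[symmetric, OF i1 bF Ym])
  have e2: "(\<integral>w. b w * (G w * Yj w) \<partial>M) = (\<integral>w. b w * (sc w * ?c w) \<partial>M)"
  proof -
    have "(\<integral>w. b w * (G w * Yj w) \<partial>M) = (\<integral>w. b w * real_cond_exp M FX (\<lambda>w. G w * Yj w) w \<partial>M)"
      by (rule Fs.real_cond_exp_intg(2)[symmetric, OF i2 bF]) measurable
    also have "\<dots> = (\<integral>w. b w * (sc w * ?c w) \<partial>M)"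
      by (rule integral_cong_AE) (use rc in \<open>auto elim!: eventually_mono\<close>)
    finally show ?thesis .
  qed
  have e3: "(\<integral>w. (b w * ?c w) * G w \<partial>M) = (\<integral>w. b w * (sc w * ?c w) \<partial>M)"
  proof -
    have "(\<integral>w. (b w * ?c w) * G w \<partial>M) = (\<integral>w. (b w * ?c w) * real_cond_exp M FX G w \<partial>M)"
      by (rule Fs.real_cond_exp_intg(2)[symmetric, OF i3 bcF]) measurable
    also have "\<dots> = (\<integral>w. b w * (sc w * ?c w) \<partial>M)"
      by (rule integral_cong_AE) (use C1 in \<open>auto elim!: eventually_mono simp: ac_simps\<close>)
    finally show ?thesis .
  qed
  have "(\<integral>w. (1 - G w) * b w * Yj w \<partial>M) = (\<integral>w. b w * Yj w - b w * (G w * Yj w) \<partial>M)"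
    by (simp add: algebra_simps)
  also have "\<dots> = (\<integral>w. b w * Yj w \<partial>M) - (\<integral>w. b w * (G w * Yj w) \<partial>M)"
    by (rule Bochner_Integration.integral_diff[OF i1 i2])
  also have "\<dots> = (\<integral>w. b w * ?c w \<partial>M) - (\<integral>w. (b w * ?c w) * G w \<partial>M)"
    using e1 e2 e3 by simp
  also have "\<dots> = (\<integral>w. b w * ?c w - (b w * ?c w) * G w \<partial>M)"
    by (rule Bochner_Integration.integral_diff[OF i5 i3, symmetric])
  also have "\<dots> = (\<integral>w. (1 - G w) * b w * ?c w \<partial>M)"
    by (simp add: algebra_simps)
  finally show "(\<integral>w. (1 - G w) * b w * Yj w \<partial>M) = (\<integral>w. (1 - G w) * b w * ?c w \<partial>M)" .
qed


lemma policy_eq: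
  fixes pol :: "real ^ 'p \<Rightarrow> real"
  assumes pm: "pol \<in> borel_measurable borel" and pb: "\<forall>x. pol x \<in> {0, 1}"
  shows "policy_value M X G Y0 Y1 pol = (\<integral>w. (1 - G w) * (pol (X w) * c1 w + (1 - pol (X w)) * c0 w) \<partial>M) / (1 - q)"
    and "integrable M (\<lambda>w. (1 - G w) * (pol (X w) * c1 w + (1 - pol (X w)) * c0 w))"
proof -
  let ?E0 = "{w \<in> space M. G w = 0}"
  have E0[measurable]: "?E0 \<in> sets M" by measurable
  have E0eq: "?E0 = space M - E1" using binary by auto
  have m0: "measure M ?E0 = 1 - q" unfolding E0eq using prob_compl[OF E1_sets] E1_meas by simp
  have ind0: "indicator ?E0 w = 1 - G w" if "w \<in> space M" for w using binary that by (auto simp: indicator_def)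
  have polF: "(\<lambda>w. pol (X w)) \<in> borel_measurable FX" by (rule Fmeas_comp[OF pm])
  have pol1F: "(\<lambda>w. 1 - pol (X w)) \<in> borel_measurable FX" using polF by measurable
  have polM[measurable]: "(\<lambda>w. pol (X w)) \<in> borel_measurable M" using pm by measurable
  have pbb: "\<bar>pol x\<bar> \<le> 1" "\<bar>1 - pol x\<bar> \<le> 1" for x using pb[rule_format, of x] by auto
  have k1: "(\<integral>w. (1 - G w) * pol (X w) * Y1 w \<partial>M) = (\<integral>w. (1 - G w) * pol (X w) * c1 w \<partial>M)"
    and ik1: "integrable M (\<lambda>w. (1 - G w) * pol (X w) * c1 w)"
    using key_j[OF polF pbb(1) int_Y1 C5_1] by auto
  have k0: "(\<integral>w. (1 - G w) * (1 - pol (X w)) * Y0 w \<partial>M) = (\<integral>w. (1 - G w) * (1 - pol (X w)) * c0 w \<partial>M)"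
    and ik0: "integrable M (\<lambda>w. (1 - G w) * (1 - pol (X w)) * c0 w)"
    using key_j[OF pol1F pbb(2) int_Y0 C5_0] by auto
  have GB: "\<And>w. w \<in> space M \<Longrightarrow> \<bar>1 - G w\<bar> \<le> 1" using binary by auto
  have j1: "integrable M (\<lambda>w. (1 - G w) * pol (X w) * Y1 w)"
    by (rule int_bdd[where C=1, OF int_Y1]) (use pbb GB in \<open>auto simp: abs_mult intro: mult_le_one\<close>)
  have j0: "integrable M (\<lambda>w. (1 - G w) * (1 - pol (X w)) * Y0 w)"
    by (rule int_bdd[where C=1, OF int_Y0]) (use pbb GB in \<open>auto simp: abs_mult intro: mult_le_one\<close>)
  have "integrable M (\<lambda>w. (1 - G w) * pol (X w) * c1 w + (1 - G w) * (1 - pol (X w)) * c0 w)"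
    using ik1 ik0 by simp
  then show "integrable M (\<lambda>w. (1 - G w) * (pol (X w) * c1 w + (1 - pol (X w)) * c0 w))"
    by (simp add: algebra_simps)
  have "policy_value M X G Y0 Y1 pol
      = (\<integral>w. indicator ?E0 w * (pol (X w) * Y1 w + (1 - pol (X w)) * Y0 w) \<partial>M) / measure M ?E0"
    unfolding policy_value_def cond_on_def
    by (rule unif_integral(1)[OF M E0]) (use m0 q_lt1 in simp_all)
  also have "(\<integral>w. indicator ?E0 w * (pol (X w) * Y1 w + (1 - pol (X w)) * Y0 w) \<partial>M)
      = (\<integral>w. (1 - G w) * pol (X w) * Y1 w + (1 - G w) * (1 - pol (X w)) * Y0 w \<partial>M)"
    by (rule Bochner_Integration.integral_cong) (auto simp: ind0 algebra_simps)
  also have "\<dots> = (\<integral>w. (1 - G w) * pol (X w) * Y1 w \<partial>M) + (\<integral>w. (1 - G w) * (1 - pol (X w)) * Y0 w \<partial>M)"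
    by (rule Bochner_Integration.integral_add[OF j1 j0])
  also have "\<dots> = (\<integral>w. (1 - G w) * pol (X w) * c1 w \<partial>M) + (\<integral>w. (1 - G w) * (1 - pol (X w)) * c0 w \<partial>M)"
    using k1 k0 by simp
  also have "\<dots> = (\<integral>w. (1 - G w) * pol (X w) * c1 w + (1 - G w) * (1 - pol (X w)) * c0 w \<partial>M)"
    by (rule Bochner_Integration.integral_add[OF ik1 ik0, symmetric])
  also have "\<dots> = (\<integral>w. (1 - G w) * (pol (X w) * c1 w + (1 - pol (X w)) * c0 w) \<partial>M)"
    by (simp add: algebra_simps)
  finally show "policy_value M X G Y0 Y1 pol = (\<integral>w. (1 - G w) * (pol (X w) * c1 w + (1 - pol (X w)) * c0 w) \<partial>M) / (1 - q)"
    using m0 by simp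
qed


lemma T_generic:
  fixes f H Yj r :: "'w \<Rightarrow> real" and m :: "real ^ 'p \<Rightarrow> real"
  assumes mm: "m \<in> borel_measurable borel" and fF: "f \<in> borel_measurable FX"
    and Hm[measurable]: "H \<in> borel_measurable M" and Yjm[measurable]: "Yj \<in> borel_measurable M"
    and iH: "integrable M H" and iHY: "integrable M (\<lambda>w. H w * Yj w)"
    and rm[measurable]: "r \<in> borel_measurable M"
    and rH: "AE w in M. real_cond_exp M FX H w = r w"
    and rHY: "AE w in M. real_cond_exp M FX (\<lambda>w. H w * Yj w) w = r w * real_cond_exp M FX Yj w"
    and i: "integrable M (\<lambda>w. f w * (H w * (Yj w - m (X w))))"
  shows "(\<integral>w. f w * (H w * (Yj w - m (X w))) \<partial>M) = (\<integral>w. f w * (r w * (real_cond_exp M FX Yj w - m (X w))) \<partial>M)"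
    and "integrable M (\<lambda>w. f w * (r w * (real_cond_exp M FX Yj w - m (X w))))"
proof -
  have mF: "(\<lambda>w. - m (X w)) \<in> borel_measurable FX" using Fmeas_comp[OF mm] by measurable
  have mM[measurable]: "(\<lambda>w. m (X w)) \<in> borel_measurable M" using mm by measurable
  have gm: "(\<lambda>w. H w * (Yj w - m (X w))) \<in> borel_measurable M" by measurable
  have rc: "AE w in M. real_cond_exp M FX (\<lambda>w. H w * (Yj w - m (X w))) w
      = (- m (X w)) * real_cond_exp M FX H w + real_cond_exp M FX (\<lambda>w. H w * Yj w) w"
    by (rule Fs.rce_combo[OF gm mF iHY iH]) (simp add: algebra_simps)
  have ae: "AE w in M. f w * real_cond_exp M FX (\<lambda>w. H w * (Yj w - m (X w))) w
      = f w * (r w * (real_cond_exp M FX Yj w - m (X w)))"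
    using rc rH rHY
  proof eventually_elim
    fix w assume a: "real_cond_exp M FX (\<lambda>w. H w * (Yj w - m (X w))) w
      = (- m (X w)) * real_cond_exp M FX H w + real_cond_exp M FX (\<lambda>w. H w * Yj w) w"
      and b: "real_cond_exp M FX H w = r w"
      and c: "real_cond_exp M FX (\<lambda>w. H w * Yj w) w = r w * real_cond_exp M FX Yj w"
    show "f w * real_cond_exp M FX (\<lambda>w. H w * (Yj w - m (X w))) w
      = f w * (r w * (real_cond_exp M FX Yj w - m (X w)))"
      unfolding a b c by (simp add: algebra_simps)
  qed
  have i2: "integrable M (\<lambda>w. f w * real_cond_exp M FX (\<lambda>w. H w * (Yj w - m (X w))) w)"
    by (rule Fs.real_cond_exp_intg(1)[OF i fF gm])
  show "integrable M (\<lambda>w. f w * (r w * (real_cond_exp M FX Yj w - m (X w))))"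
  proof (rule integrable_cong_AE_imp[OF i2 _ ae])
    have [measurable]: "f \<in> borel_measurable M" by (rule measurable_from_subalg[OF Fs.subalg fF])
    show "(\<lambda>w. f w * (r w * (real_cond_exp M FX Yj w - m (X w)))) \<in> borel_measurable M" by measurable
  qed
  have "(\<integral>w. f w * (H w * (Yj w - m (X w))) \<partial>M) = (\<integral>w. f w * real_cond_exp M FX (\<lambda>w. H w * (Yj w - m (X w))) w \<partial>M)"
    by (rule Fs.real_cond_exp_intg(2)[symmetric, OF i fF gm])
  also have "\<dots> = (\<integral>w. f w * (r w * (real_cond_exp M FX Yj w - m (X w))) \<partial>M)"
  proof (rule integral_cong_AE[OF _ _ ae])
    have [measurable]: "f \<in> borel_measurable M" by (rule measurable_from_subalg[OF Fs.subalg fF])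
    show "(\<lambda>w. f w * (r w * (real_cond_exp M FX Yj w - m (X w)))) \<in> borel_measurable M" by measurable
    show "(\<lambda>w. f w * real_cond_exp M FX (\<lambda>w. H w * (Yj w - m (X w))) w) \<in> borel_measurable M" by measurable
  qed
  finally show "(\<integral>w. f w * (H w * (Yj w - m (X w))) \<partial>M) = (\<integral>w. f w * (r w * (real_cond_exp M FX Yj w - m (X w))) \<partial>M)" .
qed


lemma swap1G:
  fixes b :: "'w \<Rightarrow> real"
  assumes bF: "b \<in> borel_measurable FX" and ib: "integrable M (\<lambda>w. b w * (1 - sc w))"
  shows "integrable M (\<lambda>w. b w * (1 - G w))"
    and "(\<integral>w. b w * (1 - G w) \<partial>M) = (\<integral>w. b w * (1 - sc w) \<partial>M)"
proof -
  have bM[measurable]: "b \<in> borel_measurable M" by (rule measurable_from_subalg[OF Fs.subalg bF])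
  have i1: "integrable M (\<lambda>w. 1 :: real)" by simp
  have i1G: "integrable M (\<lambda>w. 1 - G w)" using iG by simp
  have r1: "AE w in M. real_cond_exp M FX (\<lambda>w. 1) w = 1"
    by (rule Fs.real_cond_exp_F_meas) auto
  have rd: "AE w in M. real_cond_exp M FX (\<lambda>w. 1 - G w) w = real_cond_exp M FX (\<lambda>w. 1) w - real_cond_exp M FX G w"
    by (rule Fs.real_cond_exp_diff[OF i1 iG])
  have rc: "AE w in M. real_cond_exp M FX (\<lambda>w. 1 - G w) w = 1 - sc w"
    using r1 rd C1 by eventually_elim simp
  have ib2: "integrable M (\<lambda>w. b w * real_cond_exp M FX (\<lambda>w. 1 - G w) w)"
    by (rule integrable_cong_AE_imp[OF ib]) (use rc in \<open>auto elim!: eventually_mono\<close>)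
  show i: "integrable M (\<lambda>w. b w * (1 - G w))"
    by (rule Fs.rce_nonneg_integrable[OF i1G _ bF ib2]) (use binary in auto)
  have "(\<integral>w. b w * (1 - G w) \<partial>M) = (\<integral>w. b w * real_cond_exp M FX (\<lambda>w. 1 - G w) w \<partial>M)"
    by (rule Fs.real_cond_exp_intg(2)[symmetric, OF i bF]) measurable
  also have "\<dots> = (\<integral>w. b w * (1 - sc w) \<partial>M)"
    by (rule integral_cong_AE) (use rc in \<open>auto elim!: eventually_mono\<close>)
  finally show "(\<integral>w. b w * (1 - G w) \<partial>M) = (\<integral>w. b w * (1 - sc w) \<partial>M)" .
qed


lemma alg1: "(E::real) \<noteq> 0 \<Longrightarrow> S \<noteq> 0 \<Longrightarrow> x / E * ((1 - S) / S) * ((S * E) * y) = x * y * (1 - S)"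
  by (simp add: field_simps)
lemma alg2: "1 - (E::real) \<noteq> 0 \<Longrightarrow> S \<noteq> 0 \<Longrightarrow> x / (1 - E) * ((1 - S) / S) * ((S - S * E) * y) = x * y * (1 - S)"
  by (simp add: field_simps)

lemma alg3: "(p / (1 - q) * (c - m)) * (1 - g) + ((1 - p) / (1 - q) * (d - n)) * (1 - g)
    + (1 - g) / (1 - q) * (p * m + (1 - p) * n) = (1 - g) * (p * c + (1 - p) * d) / (1 - (q::real))"
  by (simp add: divide_inverse algebra_simps)

lemma main_expect:
  fixes pol mu0h mu1h eh sh :: "real ^ 'p \<Rightarrow> real"
  assumes pol_meas: "pol \<in> borel_measurable borel" and pol_bin: "\<forall>x. pol x \<in> {0, 1}"
    and est_meas: "mu0h \<in> borel_measurable borel" "mu1h \<in> borel_measurable borel"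
                  "eh \<in> borel_measurable borel" "sh \<in> borel_measurable borel"
    and int_terms:
      "integrable M (\<lambda>w. G w / (1 - q) * (pol (X w) * A w * (Y w - mu1h (X w)) / eh (X w))
                          * ((1 - sh (X w)) / sh (X w)))"
      "integrable M (\<lambda>w. G w / (1 - q) * ((1 - pol (X w)) * (1 - A w) * (Y w - mu0h (X w)) / (1 - eh (X w)))
                          * ((1 - sh (X w)) / sh (X w)))"
      "integrable M (\<lambda>w. (1 - G w) / (1 - q) * (pol (X w) * mu1h (X w) + (1 - pol (X w)) * mu0h (X w)))"
    and correct: "(mu1h = mu1 \<and> mu0h = mu0) \<or> (eh = e1 \<and> sh = s)"
  shows "(\<integral>w. se_term q pol mu0h mu1h eh sh (X w, G w, A w, Y w) \<partial>M) = policy_value M X G Y0 Y1 pol"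
proof -
  note [measurable] = pol_meas est_meas
  define T1 where "T1 = (\<lambda>w. G w / (1 - q) * (pol (X w) * A w * (Y w - mu1h (X w)) / eh (X w))
                          * ((1 - sh (X w)) / sh (X w)))"
  define T2 where "T2 = (\<lambda>w. G w / (1 - q) * ((1 - pol (X w)) * (1 - A w) * (Y w - mu0h (X w)) / (1 - eh (X w)))
                          * ((1 - sh (X w)) / sh (X w)))"
  define T3 where "T3 = (\<lambda>w. (1 - G w) / (1 - q) * (pol (X w) * mu1h (X w) + (1 - pol (X w)) * mu0h (X w)))"
  define f1 where "f1 = (\<lambda>w. pol (X w) / (1 - q) / eh (X w) * ((1 - sh (X w)) / sh (X w)))"
  define f2 where "f2 = (\<lambda>w. (1 - pol (X w)) / (1 - q) / (1 - eh (X w)) * ((1 - sh (X w)) / sh (X w)))"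
  define Z where "Z = (\<lambda>w. (1 - G w) * (pol (X w) * c1 w + (1 - pol (X w)) * c0 w))"
  have iT: "integrable M T1" "integrable M T2" "integrable M T3"
    using int_terms unfolding T1_def T2_def T3_def by auto
  have f1F: "f1 \<in> borel_measurable FX" unfolding f1_def by (rule Fmeas_comp) measurable
  have f2F: "f2 \<in> borel_measurable FX" unfolding f2_def by (rule Fmeas_comp) measurable
  have f1M[measurable]: "f1 \<in> borel_measurable M" by (rule measurable_from_subalg[OF Fs.subalg f1F])
  have f2M[measurable]: "f2 \<in> borel_measurable M" by (rule measurable_from_subalg[OF Fs.subalg f2F])
  have T1eq: "T1 w = f1 w * (G w * A w * (Y1 w - mu1h (X w)))" if w: "w \<in> space M" for w
  proof -
    have AY: "A w * Y w = A w * Y1 w" using binary consistency w by auto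
    have "T1 w = f1 w * (G w * (A w * Y w - A w * mu1h (X w)))"
      unfolding T1_def f1_def by (simp add: divide_inverse algebra_simps)
    also have "\<dots> = f1 w * (G w * A w * (Y1 w - mu1h (X w)))"
      unfolding AY by (simp add: algebra_simps)
    finally show ?thesis .
  qed
  have T2eq: "T2 w = f2 w * (G w * (1 - A w) * (Y0 w - mu0h (X w)))" if w: "w \<in> space M" for w
  proof -
    have AY: "(1 - A w) * Y w = (1 - A w) * Y0 w" using binary consistency w by auto
    have "T2 w = f2 w * (G w * ((1 - A w) * Y w - (1 - A w) * mu0h (X w)))"
      unfolding T2_def f2_def by (simp add: divide_inverse algebra_simps)
    also have "\<dots> = f2 w * (G w * (1 - A w) * (Y0 w - mu0h (X w)))"
      unfolding AY by (simp add: algebra_simps)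
    finally show ?thesis .
  qed
  have iT1': "integrable M (\<lambda>w. f1 w * (G w * A w * (Y1 w - mu1h (X w))))"
    using iT(1) by (rule Bochner_Integration.integrable_cong[THEN iffD1, rotated 2]) (use T1eq in auto)
  have iT2': "integrable M (\<lambda>w. f2 w * (G w * (1 - A w) * (Y0 w - mu0h (X w))))"
    using iT(2) by (rule Bochner_Integration.integrable_cong[THEN iffD1, rotated 2]) (use T2eq in auto)
  have iG1A: "integrable M (\<lambda>w. G w * (1 - A w))" by (rule int_bounded[where C=1]) (use binary in auto)
  have iG1AY0: "integrable M (\<lambda>w. G w * (1 - A w) * Y0 w)"
    by (rule int_bdd[where C=1, OF int_Y0]) (use binary in auto)
  have G1: "(\<integral>w. T1 w \<partial>M) = (\<integral>w. f1 w * ((sc w * e1c w) * (c1 w - mu1h (X w))) \<partial>M)"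
    and G1i: "integrable M (\<lambda>w. f1 w * ((sc w * e1c w) * (c1 w - mu1h (X w))))"
  proof -
    have "(\<integral>w. T1 w \<partial>M) = (\<integral>w. f1 w * (G w * A w * (Y1 w - mu1h (X w))) \<partial>M)"
      by (rule Bochner_Integration.integral_cong) (use T1eq in auto)
    then show "(\<integral>w. T1 w \<partial>M) = (\<integral>w. f1 w * ((sc w * e1c w) * (c1 w - mu1h (X w))) \<partial>M)"
      using T_generic(1)[of mu1h f1 "\<lambda>w. G w * A w" Y1 "\<lambda>w. sc w * e1c w"] iT1' f1F iGA iGAY1 C2 C3_1 est_meas
      by simp
    show "integrable M (\<lambda>w. f1 w * ((sc w * e1c w) * (c1 w - mu1h (X w))))"
      using T_generic(2)[of mu1h f1 "\<lambda>w. G w * A w" Y1 "\<lambda>w. sc w * e1c w"] iT1' f1F iGA iGAY1 C2 C3_1 est_meas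
      by simp
  qed
  have G2: "(\<integral>w. T2 w \<partial>M) = (\<integral>w. f2 w * ((sc w - sc w * e1c w) * (c0 w - mu0h (X w))) \<partial>M)"
    and G2i: "integrable M (\<lambda>w. f2 w * ((sc w - sc w * e1c w) * (c0 w - mu0h (X w))))"
  proof -
    have "(\<integral>w. T2 w \<partial>M) = (\<integral>w. f2 w * (G w * (1 - A w) * (Y0 w - mu0h (X w))) \<partial>M)"
      by (rule Bochner_Integration.integral_cong) (use T2eq in auto)
    then show "(\<integral>w. T2 w \<partial>M) = (\<integral>w. f2 w * ((sc w - sc w * e1c w) * (c0 w - mu0h (X w))) \<partial>M)"
      using T_generic(1)[of mu0h f2 "\<lambda>w. G w * (1 - A w)" Y0 "\<lambda>w. sc w - sc w * e1c w"] iT2' f2F iG1A iG1AY0 C7 C8 est_meas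
      by simp
    show "integrable M (\<lambda>w. f2 w * ((sc w - sc w * e1c w) * (c0 w - mu0h (X w))))"
      using T_generic(2)[of mu0h f2 "\<lambda>w. G w * (1 - A w)" Y0 "\<lambda>w. sc w - sc w * e1c w"] iT2' f2F iG1A iG1AY0 C7 C8 est_meas
      by simp
  qed
  have se: "se_term q pol mu0h mu1h eh sh (X w, G w, A w, Y w) = T1 w + T2 w + T3 w" for w
    unfolding se_term_def T1_def T2_def T3_def by simp
  have "(\<integral>w. se_term q pol mu0h mu1h eh sh (X w, G w, A w, Y w) \<partial>M) = (\<integral>w. T1 w + T2 w + T3 w \<partial>M)"
    by (simp add: se)
  also have "\<dots> = (\<integral>w. T1 w \<partial>M) + (\<integral>w. T2 w \<partial>M) + (\<integral>w. T3 w \<partial>M)"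
    using iT by simp
  also have "\<dots> = (\<integral>w. Z w \<partial>M) / (1 - q)"
    using correct
  proof
    assume c: "mu1h = mu1 \<and> mu0h = mu0"
    have z1: "(\<integral>w. T1 w \<partial>M) = 0"
      unfolding G1 using C6_1 c by (intro integral_eq_zero_AE) (auto elim!: eventually_mono)
    have z2: "(\<integral>w. T2 w \<partial>M) = 0"
      unfolding G2 using C6_0 c by (intro integral_eq_zero_AE) (auto elim!: eventually_mono)
    have "(\<integral>w. T3 w \<partial>M) = (\<integral>w. Z w / (1 - q) \<partial>M)"
    proof (rule integral_cong_AE)
      show "T3 \<in> borel_measurable M" unfolding T3_def by measurable
      show "(\<lambda>w. Z w / (1 - q)) \<in> borel_measurable M" unfolding Z_def by measurable
      show "AE w in M. T3 w = Z w / (1 - q)"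
        using C6_1 C6_0 by eventually_elim (simp add: T3_def Z_def c)
    qed
    then show ?thesis using z1 z2 by simp
  next
    assume c: "eh = e1 \<and> sh = s"
    have qne: "1 - q \<noteq> 0" and qne': "q \<noteq> 1" using q_lt1 by simp_all
    have ceh: "eh = e1" "sh = s" using c by auto
    define b1 where "b1 = (\<lambda>w. pol (X w) / (1 - q) * (c1 w - mu1h (X w)))"
    define b2 where "b2 = (\<lambda>w. (1 - pol (X w)) / (1 - q) * (c0 w - mu0h (X w)))"
    have b1F: "b1 \<in> borel_measurable FX" unfolding b1_def
      using Fmeas_comp[OF pol_meas, of X M] Fmeas_comp[OF est_meas(2), of X M] by measurable
    have b2F: "b2 \<in> borel_measurable FX" unfolding b2_def
      using Fmeas_comp[OF pol_meas, of X M] Fmeas_comp[OF est_meas(1), of X M] by measurable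
    have ae1: "AE w in M. f1 w * ((sc w * e1c w) * (c1 w - mu1h (X w))) = b1 w * (1 - sc w)"
      using sc_eq e1c_eq
    proof eventually_elim
      case (elim w)
      have h: "s (X w) \<noteq> 0" "e1 (X w) \<noteq> 0" using elim by auto
      have sw: "sc w = s (X w)" "e1c w = e1 (X w)" using elim by auto
      show ?case unfolding f1_def b1_def ceh sw by (rule alg1[OF h(2) h(1)])
    qed
    have ae2: "AE w in M. f2 w * ((sc w - sc w * e1c w) * (c0 w - mu0h (X w))) = b2 w * (1 - sc w)"
      using sc_eq e1c_eq
    proof eventually_elim
      case (elim w)
      have h: "s (X w) \<noteq> 0" "1 - e1 (X w) \<noteq> 0" using elim by auto
      have sw: "sc w = s (X w)" "e1c w = e1 (X w)" using elim by auto
      show ?case unfolding f2_def b2_def ceh sw by (rule alg2[OF h(2) h(1)])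
    qed
    have b1M[measurable]: "b1 \<in> borel_measurable M" by (rule measurable_from_subalg[OF Fs.subalg b1F])
    have b2M[measurable]: "b2 \<in> borel_measurable M" by (rule measurable_from_subalg[OF Fs.subalg b2F])
    have ib1: "integrable M (\<lambda>w. b1 w * (1 - sc w))"
      by (rule integrable_cong_AE_imp[OF G1i _ ae1]) measurable
    have ib2: "integrable M (\<lambda>w. b2 w * (1 - sc w))"
      by (rule integrable_cong_AE_imp[OF G2i _ ae2]) measurable
    have e1: "(\<integral>w. T1 w \<partial>M) = (\<integral>w. b1 w * (1 - G w) \<partial>M)"
    proof -
      have "(\<integral>w. T1 w \<partial>M) = (\<integral>w. b1 w * (1 - sc w) \<partial>M)"
        unfolding G1 by (rule integral_cong_AE[OF borel_measurable_integrable[OF G1i] borel_measurable_integrable[OF ib1] ae1])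
      then show ?thesis using swap1G(2)[OF b1F ib1] by simp
    qed
    have e2: "(\<integral>w. T2 w \<partial>M) = (\<integral>w. b2 w * (1 - G w) \<partial>M)"
    proof -
      have "(\<integral>w. T2 w \<partial>M) = (\<integral>w. b2 w * (1 - sc w) \<partial>M)"
        unfolding G2 by (rule integral_cong_AE[OF borel_measurable_integrable[OF G2i] borel_measurable_integrable[OF ib2] ae2])
      then show ?thesis using swap1G(2)[OF b2F ib2] by simp
    qed
    have j1: "integrable M (\<lambda>w. b1 w * (1 - G w))" by (rule swap1G(1)[OF b1F ib1])
    have j2: "integrable M (\<lambda>w. b2 w * (1 - G w))" by (rule swap1G(1)[OF b2F ib2])
    have "(\<integral>w. T1 w \<partial>M) + (\<integral>w. T2 w \<partial>M) + (\<integral>w. T3 w \<partial>M)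
        = (\<integral>w. b1 w * (1 - G w) + b2 w * (1 - G w) + T3 w \<partial>M)"
      unfolding e1 e2 using j1 j2 iT(3) by simp
    also have "\<dots> = (\<integral>w. Z w / (1 - q) \<partial>M)"
      by (rule Bochner_Integration.integral_cong[OF refl]) (unfold b1_def b2_def T3_def Z_def, rule alg3)
    finally show ?thesis by simp
  qed
  also have "\<dots> = policy_value M X G Y0 Y1 pol"
    using policy_eq(1)[OF pol_meas pol_bin] by (simp add: Z_def)
  finally show ?thesis .
qed

end



lemma se_alt: "se_term q pol mu0h mu1h eh sh u = fst (snd u) / (1 - q) * (pol (fst u) * fst (snd (snd u)) * (snd (snd (snd u)) - mu1h (fst u)) / eh (fst u)) * ((1 - sh (fst u)) / sh (fst u))
     + fst (snd u) / (1 - q) * ((1 - pol (fst u)) * (1 - fst (snd (snd u))) * (snd (snd (snd u)) - mu0h (fst u)) / (1 - eh (fst u))) * ((1 - sh (fst u)) / sh (fst u))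
     + (1 - fst (snd u)) / (1 - q) * (pol (fst u) * mu1h (fst u) + (1 - pol (fst u)) * mu0h (fst u))"
proof -
  obtain x g a y where u: "u = (x, g, a, y)" by (cases u) auto
  show ?thesis unfolding u se_term_def by (simp only: prod.case fst_conv snd_conv)
qed
lemma se_meas:
  fixes pol mu0h mu1h eh sh :: "real ^ 'p \<Rightarrow> real"
  assumes [measurable]: "pol \<in> borel_measurable borel" "mu0h \<in> borel_measurable borel" "mu1h \<in> borel_measurable borel"
    "eh \<in> borel_measurable borel" "sh \<in> borel_measurable borel"
  shows "se_term q pol mu0h mu1h eh sh \<in> borel_measurable (borel :: ((real ^ 'p) \<times> real \<times> real \<times> real) measure)"
proof -
  have p1[measurable]: "(\<lambda>u::((real ^ 'p) \<times> real \<times> real \<times> real). fst u) \<in> borel_measurable borel"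
    by (intro borel_measurable_continuous_onI continuous_intros)
  have p2[measurable]: "(\<lambda>u::((real ^ 'p) \<times> real \<times> real \<times> real). fst (snd u)) \<in> borel_measurable borel"
    by (intro borel_measurable_continuous_onI continuous_intros)
  have p3[measurable]: "(\<lambda>u::((real ^ 'p) \<times> real \<times> real \<times> real). fst (snd (snd u))) \<in> borel_measurable borel"
    by (intro borel_measurable_continuous_onI continuous_intros)
  have p4[measurable]: "(\<lambda>u::((real ^ 'p) \<times> real \<times> real \<times> real). snd (snd (snd u))) \<in> borel_measurable borel"
    by (intro borel_measurable_continuous_onI continuous_intros)
  have eq: "se_term q pol mu0h mu1h eh sh = (\<lambda>u::((real ^ 'p) \<times> real \<times> real \<times> real). fst (snd u) / (1 - q) * (pol (fst u) * fst (snd (snd u)) * (snd (snd (snd u)) - mu1h (fst u)) / eh (fst u)) * ((1 - sh (fst u)) / sh (fst u))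
     + fst (snd u) / (1 - q) * ((1 - pol (fst u)) * (1 - fst (snd (snd u))) * (snd (snd (snd u)) - mu0h (fst u)) / (1 - eh (fst u))) * ((1 - sh (fst u)) / sh (fst u))
     + (1 - fst (snd u)) / (1 - q) * (pol (fst u) * mu1h (fst u) + (1 - pol (fst u)) * mu0h (fst u)))"
    by (rule ext) (rule se_alt)
  show ?thesis unfolding eq by measurable
qed
theorem proposition2:
  fixes M :: "'w measure"
    and X :: "'w \<Rightarrow> real ^ 'p"
    and G A Y0 Y1 Y :: "'w \<Rightarrow> real"
    and pol mu0 mu1 e1 s mu0h mu1h eh sh :: "real ^ 'p \<Rightarrow> real"
    and q :: real and n :: nat
  assumes M: "prob_space M"
    and meas: "X \<in> borel_measurable M" "G \<in> borel_measurable M" "A \<in> borel_measurable M"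
              "Y0 \<in> borel_measurable M" "Y1 \<in> borel_measurable M"
    and binary: "\<forall>w\<in>space M. G w \<in> {0, 1} \<and> A w \<in> {0, 1}"
    and consistency: "\<forall>w\<in>space M. Y w = A w * Y1 w + (1 - A w) * Y0 w"
    and int_Y: "integrable M Y0" "integrable M Y1"
    and q_def: "q = measure M {w \<in> space M. G w = 1}"
    and q_bounds: "0 < q" "q < 1"
    \<comment> \<open>nuisance functions (versions of the conditional expectations)\<close>
    and e1_def: "is_cond_exp_fn (cond_on M (\<lambda>w. G w = 1)) X A e1"
    and s_def: "is_cond_exp_fn M X G s"
    and mu1_def: "is_cond_exp_fn (cond_on M (\<lambda>w. A w = 1 \<and> G w = 1)) X Y mu1"
    and mu0_def: "is_cond_exp_fn (cond_on M (\<lambda>w. A w = 0 \<and> G w = 1)) X Y mu0"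
    \<comment> \<open>Assumption (A1)\<close>
    and A1_indep: "cond_indep (cond_on M (\<lambda>w. G w = 1)) borel (\<lambda>w. (Y1 w, Y0 w)) borel A borel X"
    and A1_pos: "AE w in M. G w = 1 \<longrightarrow> 0 < e1 (X w) \<and> e1 (X w) < 1"
    \<comment> \<open>Assumption (A2)\<close>
    and A2_indep: "cond_indep M borel (\<lambda>w. (Y0 w, Y1 w)) borel G borel X"
    and A2_pos: "AE w in M. 0 < s (X w) \<and> s (X w) < 1"
    \<comment> \<open>policy and fixed estimated nuisance functions\<close>
    and pol_meas: "pol \<in> borel_measurable borel" and pol_bin: "\<forall>x. pol x \<in> {0, 1}"
    and est_meas: "mu0h \<in> borel_measurable borel" "mu1h \<in> borel_measurable borel"
                  "eh \<in> borel_measurable borel" "sh \<in> borel_measurable borel"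
    \<comment> \<open>regularity: the per-unit terms of the estimator have finite expectation\<close>
    and int_terms:
      "integrable M (\<lambda>w. G w / (1 - q) * (pol (X w) * A w * (Y w - mu1h (X w)) / eh (X w))
                          * ((1 - sh (X w)) / sh (X w)))"
      "integrable M (\<lambda>w. G w / (1 - q) * ((1 - pol (X w)) * (1 - A w) * (Y w - mu0h (X w)) / (1 - eh (X w)))
                          * ((1 - sh (X w)) / sh (X w)))"
      "integrable M (\<lambda>w. (1 - G w) / (1 - q) * (pol (X w) * mu1h (X w) + (1 - pol (X w)) * mu0h (X w)))"
    and n_pos: "n > 0"
    \<comment> \<open>(i) outcome models correct, or (ii) treatment and selection models correct\<close>
    and correct: "(mu1h = mu1 \<and> mu0h = mu0) \<or> (eh = e1 \<and> sh = s)"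
  shows "(\<integral> z. R_SE n q pol mu0h mu1h eh sh z
            \<partial>(PiM {..<n} (\<lambda>_. distr M borel (\<lambda>w. (X w, G w, A w, Y w)))))
         = policy_value M X G Y0 Y1 pol"
proof -
  interpret S: setting M X G A Y0 Y1 Y mu0 mu1 e1 s q
    by (rule setting.intro) (rule assms)+
  let ?D = "distr M borel (\<lambda>w. (X w, G w, A w, Y w))"
  let ?se = "se_term q pol mu0h mu1h eh sh"
  note [measurable] = meas pol_meas est_meas S.measY
  have XGAY: "(\<lambda>w. (X w, G w, A w, Y w)) \<in> borel_measurable M" by measurable
  have se_meas: "?se \<in> borel_measurable borel"
    by (rule se_meas[OF pol_meas est_meas])
  have iM: "integrable M (\<lambda>w. ?se (X w, G w, A w, Y w))"
  proof -
    have "integrable M (\<lambda>w. (G w / (1 - q) * (pol (X w) * A w * (Y w - mu1h (X w)) / eh (X w)) * ((1 - sh (X w)) / sh (X w))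
       + G w / (1 - q) * ((1 - pol (X w)) * (1 - A w) * (Y w - mu0h (X w)) / (1 - eh (X w))) * ((1 - sh (X w)) / sh (X w)))
       + (1 - G w) / (1 - q) * (pol (X w) * mu1h (X w) + (1 - pol (X w)) * mu0h (X w)))"
      using int_terms by (intro Bochner_Integration.integrable_add) auto
    then show ?thesis by (simp add: se_term_def)
  qed
  have iD: "integrable ?D ?se"
    using iM by (subst integrable_distr_eq[OF XGAY se_meas])
  have ED: "integral\<^sup>L ?D ?se = policy_value M X G Y0 Y1 pol"
    using integral_distr[OF XGAY se_meas] S.main_expect[OF pol_meas pol_bin est_meas int_terms correct] by simp
  have Dprob: "prob_space ?D" by (rule prob_space.prob_space_distr[OF M XGAY])
  have comp: "distr (PiM {..<n} (\<lambda>_. ?D)) ?D (\<lambda>z. z i) = ?D" if "i \<in> {..<n}" for i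
    by (rule distr_PiM_component[OF Dprob that])
  have cm: "(\<lambda>z. z i) \<in> measurable (PiM {..<n} (\<lambda>_. ?D)) ?D" if "i \<in> {..<n}" for i
    using that by measurable
  have ci: "integrable (PiM {..<n} (\<lambda>_. ?D)) (\<lambda>z. ?se (z i))" if "i \<in> {..<n}" for i
  proof -
    have "integrable (distr (PiM {..<n} (\<lambda>_. ?D)) ?D (\<lambda>z. z i)) ?se" using iD comp[OF that] by simp
    then show ?thesis by (subst (asm) integrable_distr_eq[OF cm[OF that]]) (use se_meas in auto)
  qed
  have cint: "(\<integral>z. ?se (z i) \<partial>PiM {..<n} (\<lambda>_. ?D)) = policy_value M X G Y0 Y1 pol" if "i \<in> {..<n}" for i
  proof -
    have "(\<integral>z. ?se (z i) \<partial>PiM {..<n} (\<lambda>_. ?D)) = integral\<^sup>L (distr (PiM {..<n} (\<lambda>_. ?D)) ?D (\<lambda>z. z i)) ?se"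
      by (rule integral_distr[OF cm[OF that], symmetric]) (use se_meas in auto)
    then show ?thesis using comp[OF that] ED by simp
  qed
  have "(\<integral>z. R_SE n q pol mu0h mu1h eh sh z \<partial>PiM {..<n} (\<lambda>_. ?D))
      = (\<integral>z. (1 / real n) * (\<Sum>i<n. ?se (z i)) \<partial>PiM {..<n} (\<lambda>_. ?D))"
    by (simp add: R_SE_def)
  also have "\<dots> = (1 / real n) * (\<Sum>i<n. (\<integral>z. ?se (z i) \<partial>PiM {..<n} (\<lambda>_. ?D)))"
    using ci by (simp add: Bochner_Integration.integral_sum)
  also have "\<dots> = (1 / real n) * (\<Sum>i<n. policy_value M X G Y0 Y1 pol)"
    using cint by simp
  also have "\<dots> = policy_value M X G Y0 Y1 pol"
    using n_pos by simp
  finally show ?thesis .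
qed


end
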